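(* Let $F,H\in\mathbb{R}^{n\times n}$ and let $I\subset\mathbb{R}$ be an interval such that $F+tH\in\mathrm{GL}^+(n)$ for all $t\in I$. Let $\hat\lambda\colon I\to\mathbb{R}^n$, $\hat\lambda(t)=(\hat\lambda_1(F+tH),\dots,\hat\lambda_n(F+tH))$, be the vector of ordered singular values $\hat\lambda_1(F+tH)\geq\dots\geq\hat\lambda_n(F+tH)$. Then $\hat\lambda$ is both left-differentiable and right-differentiable on the interior of $I$. Moreover, for any $t$ in the interior of $I$ and any value $\lambda\in\{\hat\lambda_1(t),\dots,\hat\lambda_n(t)\}$, let $i_{\min}^\lambda\leq i_{\max}^\lambda$ be the indices such that $\hat\lambda_i(t)=\lambda$ if and only if $i\in\mathcal I_\lambda:=\{i_{\min}^\lambda,\dots,i_{\max}^\lambda\}$. Then $$\sum_{i\in\mathcal I_\lambda}\partial^-\hat\lambda_i(t)=\sum_{i\in\mathcal I_\lambda}\partial^+\hat\lambda_i(t)$$ and $$\sum_{i=i_{\min}^\lambda}^{k}\partial^-\hat\lambda_i(t)\leq\sum_{i=i_{\min}^\lambda}^{k}\partial^+\hat\lambda_i(t)\quad\text{for all }k\in\{i_{\min}^\lambda,\dots,i_{\max}^\lambda\}.$$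
   Context: $\mathrm{GL}^+(n)$ is the group of real invertible $n\times n$ matrices with positive determinant. For a real function $f$, $\partial^-f(t)=\lim_{h\uparrow0}\frac{f(t+h)-f(t)}{h}$ and $\partial^+f(t)=\lim_{h\downarrow0}\frac{f(t+h)-f(t)}{h}$. *)

theory Defs
  imports "HOL-Analysis.Analysis"
begin

text \<open>Ordered singular values of a square matrix A, indexed by 1..n (n = CARD('n)):
  sigma_1 >= ... >= sigma_n >= 0, the square roots of the eigenvalues of A^T A counted
  with algebraic multiplicity, i.e. det (x I - A^T A) = prod_i (x - sigma_i^2).\<close>
definition sing_vals :: "real^'n^'n \<Rightarrow> nat \<Rightarrow> real" where
  "sing_vals A = (THE s.
      (\<forall>i j. 1 \<le> i \<longrightarrow> i \<le> j \<longrightarrow> j \<le> CARD('n) \<longrightarrow> s j \<le> s i) \<and>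
      (\<forall>i. 1 \<le> i \<longrightarrow> i \<le> CARD('n) \<longrightarrow> 0 \<le> s i) \<and>
      (\<forall>i. (i = 0 \<or> CARD('n) < i) \<longrightarrow> s i = 0) \<and>
      (\<forall>x::real. det (x *\<^sub>R mat 1 - transpose A ** A) = (\<Prod>i=1..CARD('n). x - (s i)\<^sup>2)))"

end

theory Submission
  imports Defs
begin

lemma quad_expand:
  fixes M :: "real^'n^'n"
  assumes sym: "transpose M = M"
  shows "(x + e *\<^sub>R w) \<bullet> (M *v (x + e *\<^sub>R w)) =
     x \<bullet> (M *v x) + 2 * e * (w \<bullet> (M *v x)) + e\<^sup>2 * (w \<bullet> (M *v w))"
proof -
  have s: "x \<bullet> (M *v w) = w \<bullet> (M *v x)"
    using sym by (metis dot_lmul_matrix vector_transpose_matrix inner_commute)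
  show ?thesis
    by (simp add: matrix_vector_right_distrib matrix_vector_mult_scaleR inner_add_left
        inner_add_right s power2_eq_square algebra_simps)
qed

lemma max_eigvec:
  fixes M :: "real^'n^'n" and v :: "nat \<Rightarrow> real^'n"
  assumes sym: "transpose M = M" and k: "k < CARD('n)"
    and eig: "\<forall>i\<in>{1..k}. M *v v i = \<mu> i *\<^sub>R v i"
  shows "\<exists>x. norm x = 1 \<and> (\<forall>i\<in>{1..k}. v i \<bullet> x = 0) \<and>
     M *v x = (x \<bullet> (M *v x)) *\<^sub>R x \<and>
     (\<forall>y. norm y = 1 \<longrightarrow> (\<forall>i\<in>{1..k}. v i \<bullet> y = 0) \<longrightarrow> y \<bullet> (M *v y) \<le> x \<bullet> (M *v x))"
proof -
  define T where "T = {x::real^'n. \<forall>i\<in>{1..k}. v i \<bullet> x = 0}"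
  define S where "S = sphere (0::real^'n) 1 \<inter> T"
  have "dim (v ` {1..k}) < DIM(real^'n)"
  proof -
    have "dim (v ` {1..k}) \<le> card (v ` {1..k})" by (rule dim_le_card') simp
    also have "\<dots> \<le> k" using card_image_le[of "{1..k}" v] by simp
    finally show ?thesis using k by simp
  qed
  then obtain z where z: "z \<noteq> 0" "\<And>y. y \<in> span (v ` {1..k}) \<Longrightarrow> orthogonal z y"
    by (rule orthogonal_to_subspace_exists) blast
  have "z /\<^sub>R norm z \<in> S"
  proof -
    have "\<forall>i\<in>{1..k}. v i \<bullet> z = 0"
    proof
      fix i assume "i \<in> {1..k}"
      hence "v i \<in> span (v ` {1..k})" by (intro span_base) auto
      thus "v i \<bullet> z = 0" using z(2) by (metis orthogonal_def inner_commute)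
    qed
    thus ?thesis using z(1) by (simp add: S_def T_def)
  qed
  hence Sne: "S \<noteq> {}" by auto
  have "T = (\<Inter>i\<in>{1..k}. {x. v i \<bullet> x = 0})" by (auto simp: T_def)
  hence cT: "closed T" by (simp add: closed_INT closed_hyperplane)
  have cS: "compact S" unfolding S_def by (intro compact_Int_closed compact_sphere cT)
  have cont: "continuous_on S (\<lambda>x. x \<bullet> (M *v x))"
    by (intro continuous_intros linear_continuous_on matrix_vector_mul_bounded_linear)
  obtain x where xS: "x \<in> S" and xmax: "\<And>y. y \<in> S \<Longrightarrow> y \<bullet> (M *v y) \<le> x \<bullet> (M *v x)"
    using continuous_attains_sup[OF cS Sne cont] by blast
  define l where "l = x \<bullet> (M *v x)"
  have nx: "norm x = 1" and xT: "\<forall>i\<in>{1..k}. v i \<bullet> x = 0" using xS by (auto simp: S_def T_def)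
  have xx: "x \<bullet> x = 1" using nx by (simp add: dot_square_norm)
  have hom: "y \<bullet> (M *v y) \<le> l * (y \<bullet> y)" if yT: "\<forall>i\<in>{1..k}. v i \<bullet> y = 0" for y
  proof (cases "y = 0")
    case True thus ?thesis by simp
  next
    case False
    define y' where "y' = (1 / norm y) *\<^sub>R y"
    have "y' \<in> S" using False yT by (simp add: S_def T_def y'_def)
    hence "y' \<bullet> (M *v y') \<le> l" using xmax l_def by blast
    moreover have "y' \<bullet> (M *v y') = (y \<bullet> (M *v y)) / (norm y)\<^sup>2"
      by (simp add: y'_def matrix_vector_mult_scaleR power2_eq_square field_simps)
    moreover have "y \<bullet> y = (norm y)\<^sup>2" by (simp add: dot_square_norm)
    ultimately show ?thesis using False by (simp add: field_simps)
  qed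
  define w where "w = M *v x - l *\<^sub>R x"
  have wT: "\<forall>i\<in>{1..k}. v i \<bullet> w = 0"
  proof
    fix i assume i: "i \<in> {1..k}"
    have "v i \<bullet> (M *v x) = (M *v v i) \<bullet> x"
      using sym by (metis dot_lmul_matrix vector_transpose_matrix)
    also have "\<dots> = 0" using eig i xT by simp
    finally show "v i \<bullet> w = 0" using xT i by (simp add: w_def inner_diff_right)
  qed
  have xw: "x \<bullet> w = 0" by (simp add: w_def inner_diff_right l_def xx)
  have wMx: "w \<bullet> (M *v x) = w \<bullet> w"
  proof -
    have "M *v x = w + l *\<^sub>R x" by (simp add: w_def)
    thus ?thesis using xw by (simp add: inner_add_right inner_commute)
  qed
  have w0: "w = 0"
  proof (rule ccontr)
    assume "w \<noteq> 0"
    hence ww: "w \<bullet> w > 0" by simp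
    define c where "c = l * (w \<bullet> w) - w \<bullet> (M *v w)"
    define e where "e = (w \<bullet> w) / (\<bar>c\<bar> + 1)"
    have e0: "e > 0" using ww by (simp add: e_def)
    have "\<forall>i\<in>{1..k}. v i \<bullet> (x + e *\<^sub>R w) = 0" using xT wT by (simp add: inner_add_right)
    hence "(x + e *\<^sub>R w) \<bullet> (M *v (x + e *\<^sub>R w)) \<le> l * ((x + e *\<^sub>R w) \<bullet> (x + e *\<^sub>R w))"
      by (rule hom)
    moreover have "(x + e *\<^sub>R w) \<bullet> (x + e *\<^sub>R w) = 1 + e\<^sup>2 * (w \<bullet> w)"
      using xx xw by (simp add: inner_add_left inner_add_right inner_commute power2_eq_square)
    ultimately have "l + 2 * e * (w \<bullet> w) + e\<^sup>2 * (w \<bullet> (M *v w)) \<le> l * (1 + e\<^sup>2 * (w \<bullet> w))"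
      using quad_expand[OF sym, of x e w] wMx by (simp add: l_def)
    hence "2 * e * (w \<bullet> w) \<le> e\<^sup>2 * c" by (simp add: c_def algebra_simps)
    hence "2 * (w \<bullet> w) \<le> e * c" using e0 by (simp add: power2_eq_square)
    also have "e * c \<le> e * \<bar>c\<bar>" using e0 by (simp add: mult_left_mono)
    also have "e * \<bar>c\<bar> < w \<bullet> w"
    proof -
      have "e * \<bar>c\<bar> = (w \<bullet> w) * (\<bar>c\<bar> / (\<bar>c\<bar> + 1))" by (simp add: e_def)
      also have "\<dots> < (w \<bullet> w) * 1" using ww by (intro mult_strict_left_mono) auto
      finally show ?thesis by simp
    qed
    finally show False using ww by simp
  qed
  hence "M *v x = l *\<^sub>R x" by (simp add: w_def)
  moreover have "\<forall>y. norm y = 1 \<longrightarrow> (\<forall>i\<in>{1..k}. v i \<bullet> y = 0) \<longrightarrow> y \<bullet> (M *v y) \<le> l"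
    using xmax by (auto simp: S_def T_def l_def)
  ultimately show ?thesis using nx xT l_def by blast
qed

definition orthonormal_on :: "nat set \<Rightarrow> (nat \<Rightarrow> real^'n) \<Rightarrow> bool" where
  "orthonormal_on K v \<longleftrightarrow> (\<forall>i\<in>K. \<forall>j\<in>K. v i \<bullet> v j = (if i = j then 1 else 0))"

lemma spectral_partial:
  fixes M :: "real^'n^'n"
  assumes sym: "transpose M = M"
  shows "k \<le> CARD('n) \<Longrightarrow> \<exists>v \<mu>. orthonormal_on {1..k} v \<and> (\<forall>i\<in>{1..k}. M *v v i = \<mu> i *\<^sub>R v i) \<and>
     (\<forall>i j. 1 \<le> i \<longrightarrow> i \<le> j \<longrightarrow> j \<le> k \<longrightarrow> \<mu> j \<le> \<mu> i) \<and>
     (k \<ge> 1 \<longrightarrow> (\<forall>y. norm y = 1 \<longrightarrow> (\<forall>i\<in>{1..k-1}. v i \<bullet> y = 0) \<longrightarrow> y \<bullet> (M *v y) \<le> \<mu> k))"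
proof (induction k)
  case 0 show ?case by (auto simp: orthonormal_on_def)
next
  case (Suc k)
  then obtain v \<mu> where on: "orthonormal_on {1..k} v" and eig: "\<forall>i\<in>{1..k}. M *v v i = \<mu> i *\<^sub>R v i"
    and desc: "\<forall>i j. 1 \<le> i \<longrightarrow> i \<le> j \<longrightarrow> j \<le> k \<longrightarrow> \<mu> j \<le> \<mu> i"
    and inv: "k \<ge> 1 \<longrightarrow> (\<forall>y. norm y = 1 \<longrightarrow> (\<forall>i\<in>{1..k-1}. v i \<bullet> y = 0) \<longrightarrow> y \<bullet> (M *v y) \<le> \<mu> k)"
    by auto
  have kn: "k < CARD('n)" using Suc.prems by simp
  obtain x where nx: "norm x = 1" and xT: "\<forall>i\<in>{1..k}. v i \<bullet> x = 0"
    and ex: "M *v x = (x \<bullet> (M *v x)) *\<^sub>R x"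
    and xmax: "\<forall>y. norm y = 1 \<longrightarrow> (\<forall>i\<in>{1..k}. v i \<bullet> y = 0) \<longrightarrow> y \<bullet> (M *v y) \<le> x \<bullet> (M *v x)"
    using max_eigvec[OF sym kn eig] by blast
  define v' where "v' = v(Suc k := x)"
  define \<mu>' where "\<mu>' = \<mu>(Suc k := x \<bullet> (M *v x))"
  have xx: "x \<bullet> x = 1" using nx by (simp add: dot_square_norm)
  have le: "\<mu>' (Suc k) \<le> \<mu> k" if "k \<ge> 1"
  proof -
    have "\<forall>i\<in>{1..k-1}. v i \<bullet> x = 0" using xT by auto
    thus ?thesis using inv that nx by (simp add: \<mu>'_def)
  qed
  show ?case
  proof (intro exI[of _ v'] exI[of _ \<mu>'] conjI)
    show "orthonormal_on {1..Suc k} v'"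
      unfolding orthonormal_on_def
    proof (intro ballI)
      fix i j assume i: "i \<in> {1..Suc k}" and j: "j \<in> {1..Suc k}"
      show "v' i \<bullet> v' j = (if i = j then 1 else 0)"
      proof (cases "i = Suc k"; cases "j = Suc k")
        assume "i = Suc k" "j = Suc k" thus ?thesis by (simp add: v'_def xx)
      next
        assume "i = Suc k" "j \<noteq> Suc k" thus ?thesis using j xT by (simp add: v'_def inner_commute)
      next
        assume "i \<noteq> Suc k" "j = Suc k" thus ?thesis using i xT by (simp add: v'_def)
      next
        assume "i \<noteq> Suc k" "j \<noteq> Suc k" thus ?thesis using i j on by (simp add: v'_def orthonormal_on_def)
      qed
    qed
    show "\<forall>i\<in>{1..Suc k}. M *v v' i = \<mu>' i *\<^sub>R v' i"
      using eig ex by (auto simp: v'_def \<mu>'_def le_Suc_eq)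
    show "\<forall>i j. 1 \<le> i \<longrightarrow> i \<le> j \<longrightarrow> j \<le> Suc k \<longrightarrow> \<mu>' j \<le> \<mu>' i"
    proof (intro allI impI)
      fix i j assume ij: "1 \<le> i" "i \<le> j" "j \<le> Suc k"
      show "\<mu>' j \<le> \<mu>' i"
      proof (cases "j = Suc k")
        case False thus ?thesis using ij desc by (simp add: \<mu>'_def)
      next
        case True
        show ?thesis
        proof (cases "i = Suc k")
          case True thus ?thesis using \<open>j = Suc k\<close> by simp
        next
          case False
          hence "i \<le> k" "k \<ge> 1" using ij by auto
          hence "\<mu> k \<le> \<mu> i" using desc ij(1) by blast
          thus ?thesis using le[OF \<open>k \<ge> 1\<close>] True False by (simp add: \<mu>'_def)
        qed
      qed
    qed
    show "Suc k \<ge> 1 \<longrightarrow> (\<forall>y. norm y = 1 \<longrightarrow> (\<forall>i\<in>{1..Suc k-1}. v' i \<bullet> y = 0) \<longrightarrow> y \<bullet> (M *v y) \<le> \<mu>' (Suc k))"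
      using xmax by (simp add: v'_def \<mu>'_def)
  qed
qed

lemma spectral:
  fixes M :: "real^'n^'n"
  assumes sym: "transpose M = M"
  obtains v \<mu> where "orthonormal_on {1..CARD('n)} v" "\<forall>i\<in>{1..CARD('n)}. M *v v i = \<mu> i *\<^sub>R v i"
     "\<forall>i j. 1 \<le> i \<longrightarrow> i \<le> j \<longrightarrow> j \<le> CARD('n) \<longrightarrow> \<mu> j \<le> \<mu> i"
  using spectral_partial[OF sym, of "CARD('n)"] by blast

lemma orthonormal_complete:
  fixes v :: "nat \<Rightarrow> real^'n"
  assumes on: "orthonormal_on {1..CARD('n)} v" and x: "\<forall>i\<in>{1..CARD('n)}. v i \<bullet> x = 0"
  shows "x = 0"
proof -
  define B where "B = v ` {1..CARD('n)}"
  have inj: "inj_on v {1..CARD('n)}"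
  proof (rule inj_onI)
    fix i j assume "i \<in> {1..CARD('n)}" "j \<in> {1..CARD('n)}" "v i = v j"
    thus "i = j" using on unfolding orthonormal_on_def by (metis one_neq_zero)
  qed
  have cB: "card B = CARD('n)" using inj by (simp add: B_def card_image)
  have "pairwise orthogonal B"
    using on by (auto simp: pairwise_def B_def orthonormal_on_def orthogonal_def)
  moreover have "0 \<notin> B"
  proof
    assume "0 \<in> B"
    then obtain i where i: "i \<in> {1..CARD('n)}" "v i = 0" by (auto simp: B_def)
    hence "v i \<bullet> v i = 0" by simp
    moreover have "v i \<bullet> v i = (if i = i then 1 else 0)" using on i(1) unfolding orthonormal_on_def by blast
    ultimately show False by simp
  qed
  ultimately have ind: "independent B" by (rule pairwise_orthogonal_independent)
  have "UNIV \<subseteq> span B"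
    by (rule card_ge_dim_independent) (use ind cB in auto)
  hence "x \<in> span B" by auto
  moreover have "\<And>y. y \<in> B \<Longrightarrow> orthogonal x y"
    using x by (auto simp: B_def orthogonal_def inner_commute)
  ultimately have "orthogonal x x" by (rule orthogonal_to_span)
  thus "x = 0" by (simp add: orthogonal_def)
qed

lemma orthonormal_expand:
  fixes v :: "nat \<Rightarrow> real^'n"
  assumes on: "orthonormal_on {1..CARD('n)} v"
  shows "x = (\<Sum>i=1..CARD('n). (v i \<bullet> x) *\<^sub>R v i)"
proof -
  have "\<forall>j\<in>{1..CARD('n)}. v j \<bullet> (x - (\<Sum>i=1..CARD('n). (v i \<bullet> x) *\<^sub>R v i)) = 0"
  proof
    fix j assume j: "j \<in> {1..CARD('n)}"
    have "v j \<bullet> (\<Sum>i=1..CARD('n). (v i \<bullet> x) *\<^sub>R v i) = (\<Sum>i=1..CARD('n). (v i \<bullet> x) * (v j \<bullet> v i))"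
      by (simp add: inner_sum_right)
    also have "\<dots> = (\<Sum>i=1..CARD('n). if i = j then v j \<bullet> x else 0)"
      using on j by (intro sum.cong refl) (auto simp: orthonormal_on_def)
    also have "\<dots> = v j \<bullet> x" using j by simp
    finally show "v j \<bullet> (x - (\<Sum>i=1..CARD('n). (v i \<bullet> x) *\<^sub>R v i)) = 0" by (simp add: inner_diff_right)
  qed
  from orthonormal_complete[OF on this] show ?thesis by simp
qed

lemma parseval:
  fixes v :: "nat \<Rightarrow> real^'n"
  assumes on: "orthonormal_on {1..CARD('n)} v"
  shows "(\<Sum>i=1..CARD('n). (v i \<bullet> x)\<^sup>2) = x \<bullet> x"
proof -
  have "x \<bullet> x = x \<bullet> (\<Sum>i=1..CARD('n). (v i \<bullet> x) *\<^sub>R v i)"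
    using orthonormal_expand[OF on, of x] by simp
  also have "\<dots> = (\<Sum>i=1..CARD('n). (v i \<bullet> x)\<^sup>2)"
    by (simp add: inner_sum_right power2_eq_square inner_commute)
  finally show ?thesis by simp
qed

lemma quad_spectral:
  fixes v :: "nat \<Rightarrow> real^'n" and M :: "real^'n^'n"
  assumes on: "orthonormal_on {1..CARD('n)} v" and eig: "\<forall>i\<in>{1..CARD('n)}. M *v v i = \<mu> i *\<^sub>R v i"
  shows "x \<bullet> (M *v x) = (\<Sum>i=1..CARD('n). \<mu> i * (v i \<bullet> x)\<^sup>2)"
proof -
  have "M *v x = M *v (\<Sum>i=1..CARD('n). (v i \<bullet> x) *\<^sub>R v i)"
    using orthonormal_expand[OF on, of x] by simp
  also have "\<dots> = (\<Sum>i=1..CARD('n). (v i \<bullet> x) *\<^sub>R (\<mu> i *\<^sub>R v i))"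
    using eig by (simp add: vec.sum matrix_vector_mult_scaleR)
  finally have "x \<bullet> (M *v x) = (\<Sum>i=1..CARD('n). (v i \<bullet> x) * (\<mu> i * (x \<bullet> v i)))"
    by (simp add: inner_sum_right mult_ac)
  also have "\<dots> = (\<Sum>i=1..CARD('n). \<mu> i * (v i \<bullet> x)\<^sup>2)"
    by (intro sum.cong refl) (simp add: power2_eq_square inner_commute)
  finally show ?thesis .
qed

lemma bessel:
  fixes u :: "nat \<Rightarrow> real^'n"
  assumes on: "orthonormal_on {1..m} u"
  shows "(\<Sum>j=1..m. (u j \<bullet> y)\<^sup>2) \<le> y \<bullet> y"
proof -
  define p where "p = (\<Sum>j=1..m. (u j \<bullet> y) *\<^sub>R u j)"
  have pu: "p \<bullet> u k = u k \<bullet> y" if k: "k \<in> {1..m}" for k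
  proof -
    have "p \<bullet> u k = (\<Sum>j=1..m. (u j \<bullet> y) * (u j \<bullet> u k))" by (simp add: p_def inner_sum_left)
    also have "\<dots> = (\<Sum>j=1..m. if j = k then u k \<bullet> y else 0)"
      using on k by (intro sum.cong refl) (auto simp: orthonormal_on_def)
    also have "\<dots> = u k \<bullet> y" using k by simp
    finally show ?thesis .
  qed
  have pp: "p \<bullet> p = (\<Sum>j=1..m. (u j \<bullet> y)\<^sup>2)"
  proof -
    have "p \<bullet> p = (\<Sum>j=1..m. (u j \<bullet> y) * (p \<bullet> u j))" by (simp add: p_def inner_sum_right)
    also have "\<dots> = (\<Sum>j=1..m. (u j \<bullet> y)\<^sup>2)"
      by (intro sum.cong refl) (simp add: pu power2_eq_square)
    finally show ?thesis .
  qed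
  have yp: "y \<bullet> p = (\<Sum>j=1..m. (u j \<bullet> y)\<^sup>2)"
    by (simp add: p_def inner_sum_right power2_eq_square inner_commute)
  have "0 \<le> (y - p) \<bullet> (y - p)" by simp
  also have "\<dots> = y \<bullet> y - 2 * (y \<bullet> p) + p \<bullet> p" by (simp add: inner_diff_left inner_diff_right inner_commute)
  finally show ?thesis using pp yp by simp
qed

lemma inner_transpose_mult:
  fixes A :: "real^'n^'m"
  shows "x \<bullet> (transpose A *v y) = (A *v x) \<bullet> y"
  by (metis dot_lmul_matrix vector_transpose_matrix)

lemma quad_AtA:
  fixes A :: "real^'n^'m"
  shows "x \<bullet> ((transpose A ** A) *v x) = (norm (A *v x))\<^sup>2"
proof -
  have "x \<bullet> ((transpose A ** A) *v x) = x \<bullet> (transpose A *v (A *v x))"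
    by (simp only: matrix_vector_mul_assoc)
  also have "\<dots> = (A *v x) \<bullet> (A *v x)" by (rule inner_transpose_mult)
  also have "\<dots> = (norm (A *v x))\<^sup>2" by (rule power2_norm_eq_inner[symmetric])
  finally show ?thesis .
qed

lemma congr_entry:
  fixes Q N :: "real^'n^'n"
  shows "(transpose Q ** N ** Q) $ a $ b = (\<chi> c. Q$c$a) \<bullet> (N *v (\<chi> c. Q$c$b))"
proof -
  have "(transpose Q ** N ** Q) $ a $ b = (\<Sum>d\<in>UNIV. (\<Sum>c\<in>UNIV. Q$c$a * N$c$d) * Q$d$b)"
    unfolding matrix_matrix_mult_def transpose_def by simp
  also have "\<dots> = (\<Sum>d\<in>UNIV. \<Sum>c\<in>UNIV. Q$c$a * N$c$d * Q$d$b)"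
    by (simp only: sum_distrib_right)
  also have "\<dots> = (\<Sum>c\<in>UNIV. \<Sum>d\<in>UNIV. Q$c$a * N$c$d * Q$d$b)"
    by (rule sum.swap)
  also have "\<dots> = (\<Sum>c\<in>UNIV. Q$c$a * (\<Sum>d\<in>UNIV. N$c$d * Q$d$b))"
    by (simp only: sum_distrib_left mult.assoc)
  also have "\<dots> = (\<chi> c. Q$c$a) \<bullet> (N *v (\<chi> c. Q$c$b))"
    unfolding matrix_vector_mult_def inner_vec_def by simp
  finally show ?thesis .
qed

lemma det_char:
  fixes M :: "real^'n^'n"
  assumes on: "orthonormal_on {1..CARD('n)} v" and eig: "\<forall>i\<in>{1..CARD('n)}. M *v v i = \<mu> i *\<^sub>R v i"
  shows "det (x *\<^sub>R mat 1 - M) = (\<Prod>i=1..CARD('n). x - \<mu> i)"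
proof -
  obtain e :: "'n \<Rightarrow> nat" where e: "bij_betw e UNIV {1..CARD('n)}"
    using finite_same_card_bij[of "UNIV::'n set" "{1..CARD('n)}"] by auto
  have eb: "e b \<in> {1..CARD('n)}" for b using e by (auto simp: bij_betw_def)
  have einj: "e a = e b \<longleftrightarrow> a = b" for a b using e by (auto simp: bij_betw_def inj_on_def)
  define Q :: "real^'n^'n" where "Q = (\<chi> c b. v (e b) $ c)"
  have colQ: "(\<chi> c. Q$c$b) = v (e b)" for b by (simp add: Q_def vec_eq_iff)
  have QQ: "transpose Q ** Q = mat 1"
  proof -
    have "(transpose Q ** Q) $ a $ b = (\<chi> c. Q$c$a) \<bullet> (\<chi> c. Q$c$b)" for a b
      by (simp add: matrix_matrix_mult_def transpose_def inner_vec_def)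
    hence "(transpose Q ** Q) $ a $ b = (mat 1 :: real^'n^'n) $ a $ b" for a b
      using on eb[of a] eb[of b] einj[of a b] by (simp add: colQ orthonormal_on_def mat_def)
    thus ?thesis by (simp add: vec_eq_iff)
  qed
  have dQ: "det (transpose Q) * det Q = 1"
    using arg_cong[OF QQ, of det] by (simp add: det_mul det_I)
  define N where "N = x *\<^sub>R mat 1 - M"
  define D where "D = transpose Q ** N ** Q"
  have Dent: "D $ a $ b = (if a = b then x - \<mu> (e b) else 0)" for a b
  proof -
    have "D $ a $ b = v (e a) \<bullet> (x *\<^sub>R v (e b) - \<mu> (e b) *\<^sub>R v (e b))"
      using eig eb[of b] by (simp add: D_def congr_entry colQ N_def matrix_vector_mult_diff_rdistrib
          scaleR_matrix_vector_assoc[symmetric] matrix_vector_mul_lid)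
    also have "\<dots> = (x - \<mu> (e b)) * (v (e a) \<bullet> v (e b))" by (simp add: inner_diff_right algebra_simps)
    also have "\<dots> = (if a = b then x - \<mu> (e b) else 0)"
      using on eb[of a] eb[of b] einj[of a b] by (simp add: orthonormal_on_def)
    finally show ?thesis .
  qed
  have "det D = (\<Prod>a\<in>UNIV. x - \<mu> (e a))"
    by (subst det_diagonal) (simp_all add: Dent)
  also have "\<dots> = (\<Prod>i=1..CARD('n). x - \<mu> i)"
    using prod.reindex_bij_betw[OF e, of "\<lambda>i. x - \<mu> i"] by simp
  finally have "det D = (\<Prod>i=1..CARD('n). x - \<mu> i)" .
  moreover have "det D = det N * (det (transpose Q) * det Q)"
    by (simp add: D_def det_mul)
  ultimately show ?thesis using dQ by (simp add: N_def)
qed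

lemma roots_unique:
  fixes a b :: "nat \<Rightarrow> real"
  shows "(\<forall>i j. 1 \<le> i \<longrightarrow> i \<le> j \<longrightarrow> j \<le> n \<longrightarrow> a j \<le> a i) \<Longrightarrow>
    (\<forall>i j. 1 \<le> i \<longrightarrow> i \<le> j \<longrightarrow> j \<le> n \<longrightarrow> b j \<le> b i) \<Longrightarrow>
    (\<forall>x. (\<Prod>i=1..n. x - a i) = (\<Prod>i=1..n. x - b i)) \<Longrightarrow> \<forall>i\<in>{1..n}. a i = b i"
proof (induction n)
  case 0 thus ?case by simp
next
  case (Suc n)
  have P: "(\<Prod>i=1..Suc n. x - f i) = (\<Prod>i=1..n. x - f i) * (x - f (Suc n))" for x and f :: "nat \<Rightarrow> real"
    by (simp add: prod.cl_ivl_Suc)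
  have root: "\<exists>i\<in>{1..Suc n}. g i = f (Suc n)"
    if "\<forall>x. (\<Prod>i=1..Suc n. x - f i) = (\<Prod>i=1..Suc n. x - g i)" for f g :: "nat \<Rightarrow> real"
  proof -
    have "(\<Prod>i=1..Suc n. f (Suc n) - g i) = 0" using that[rule_format, of "f (Suc n)"] by (simp add: P)
    hence "\<exists>i\<in>{1..Suc n}. f (Suc n) - g i = 0" by (simp only: prod_zero_iff finite_atLeastAtMost)
    thus ?thesis by auto
  qed
  obtain i where i: "i \<in> {1..Suc n}" "b i = a (Suc n)" using root[OF Suc.prems(3)] by blast
  obtain j where j: "j \<in> {1..Suc n}" "a j = b (Suc n)" using root[of b a] Suc.prems(3) by metis
  have "b (Suc n) \<le> b i" using i Suc.prems(2) by auto
  moreover have "a (Suc n) \<le> a j" using j Suc.prems(1) by auto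
  ultimately have c: "a (Suc n) = b (Suc n)" using i j by simp
  define f where "f x = (\<Prod>i=1..n. x - a i) - (\<Prod>i=1..n. x - b i)" for x
  have f0: "f x = 0" if "x \<noteq> a (Suc n)" for x
    using Suc.prems(3)[rule_format, of x] that c by (simp add: P f_def)
  have "isCont f (a (Suc n))" unfolding f_def by (intro continuous_intros)
  hence t1: "(f \<longlongrightarrow> f (a (Suc n))) (at (a (Suc n)))" by (simp add: isCont_def)
  have "\<forall>\<^sub>F x in at (a (Suc n)). f x = 0"
    using f0 by (auto simp: eventually_at_filter)
  hence t2: "(f \<longlongrightarrow> 0) (at (a (Suc n)))" by (rule tendsto_eventually)
  have "f (a (Suc n)) = 0" using tendsto_unique[OF _ t1 t2] by simp
  hence "\<forall>x. (\<Prod>i=1..n. x - a i) = (\<Prod>i=1..n. x - b i)"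
    using f0 by (metis eq_iff_diff_eq_0 f_def)
  moreover have "\<forall>i j. 1 \<le> i \<longrightarrow> i \<le> j \<longrightarrow> j \<le> n \<longrightarrow> a j \<le> a i" using Suc.prems(1) by auto
  moreover have "\<forall>i j. 1 \<le> i \<longrightarrow> i \<le> j \<longrightarrow> j \<le> n \<longrightarrow> b j \<le> b i" using Suc.prems(2) by auto
  ultimately have "\<forall>i\<in>{1..n}. a i = b i" using Suc.IH by blast
  thus ?case using c by (auto simp: le_Suc_eq)
qed

lemma sing_vals_char:
  fixes A :: "real^'n^'n"
  assumes on: "orthonormal_on {1..CARD('n)} v"
    and eig: "\<forall>i\<in>{1..CARD('n)}. (transpose A ** A) *v v i = \<mu> i *\<^sub>R v i"
    and desc: "\<forall>i j. 1 \<le> i \<longrightarrow> i \<le> j \<longrightarrow> j \<le> CARD('n) \<longrightarrow> \<mu> j \<le> \<mu> i"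
  shows "\<forall>i\<in>{1..CARD('n)}. sing_vals A i = sqrt (\<mu> i) \<and> \<mu> i \<ge> 0"
proof -
  have mu0: "\<mu> i \<ge> 0" if i: "i \<in> {1..CARD('n)}" for i
  proof -
    have e1: "(transpose A ** A) *v v i = \<mu> i *\<^sub>R v i" using eig i by blast
    have e2: "v i \<bullet> v i = 1" using on i unfolding orthonormal_on_def by (metis (full_types))
    have "(norm (A *v v i))\<^sup>2 = v i \<bullet> ((transpose A ** A) *v v i)" by (rule quad_AtA[symmetric])
    also have "\<dots> = \<mu> i" unfolding e1 inner_scaleR_right e2 by simp
    finally show ?thesis by (metis zero_le_power2)
  qed
  define n where "n = CARD('n)"
  define P where "P = (\<lambda>s::nat \<Rightarrow> real.
      (\<forall>i j. 1 \<le> i \<longrightarrow> i \<le> j \<longrightarrow> j \<le> CARD('n) \<longrightarrow> s j \<le> s i) \<and>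
      (\<forall>i. 1 \<le> i \<longrightarrow> i \<le> CARD('n) \<longrightarrow> 0 \<le> s i) \<and>
      (\<forall>i. (i = 0 \<or> CARD('n) < i) \<longrightarrow> s i = 0) \<and>
      (\<forall>x::real. det (x *\<^sub>R mat 1 - transpose A ** A) = (\<Prod>i=1..CARD('n). x - (s i)\<^sup>2)))"
  define s0 where "s0 i = (if i \<in> {1..CARD('n)} then sqrt (\<mu> i) else 0)" for i
  have dc: "det (x *\<^sub>R mat 1 - transpose A ** A) = (\<Prod>i=1..CARD('n). x - \<mu> i)" for x
    by (rule det_char[OF on eig])
  have Ps0: "P s0"
  proof -
    have "(\<Prod>i=1..CARD('n). x - (s0 i)\<^sup>2) = (\<Prod>i=1..CARD('n). x - \<mu> i)" for x
      by (intro prod.cong refl) (simp add: s0_def mu0)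
    hence c4: "\<forall>x::real. det (x *\<^sub>R mat 1 - transpose A ** A) = (\<Prod>i=1..CARD('n). x - (s0 i)\<^sup>2)"
      using dc by simp
    have c1: "\<forall>i j. 1 \<le> i \<longrightarrow> i \<le> j \<longrightarrow> j \<le> CARD('n) \<longrightarrow> s0 j \<le> s0 i"
    proof (intro allI impI)
      fix i j assume "1 \<le> i" "i \<le> j" "j \<le> CARD('n)"
      hence "\<mu> j \<le> \<mu> i" "i \<in> {1..CARD('n)}" "j \<in> {1..CARD('n)}" using desc by auto
      thus "s0 j \<le> s0 i" unfolding s0_def by (simp only: if_True real_sqrt_le_mono)
    qed
    have c2: "\<forall>i. 1 \<le> i \<longrightarrow> i \<le> CARD('n) \<longrightarrow> 0 \<le> s0 i"
      using mu0 by (auto simp: s0_def)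
    have c3: "\<forall>i. (i = 0 \<or> CARD('n) < i) \<longrightarrow> s0 i = 0"
      by (auto simp: s0_def)
    show ?thesis unfolding P_def using c1 c2 c3 c4 by blast
  qed
  have uniq: "s = s0" if Ps: "P s" for s
  proof
    fix i
    have P1: "\<forall>i j. 1 \<le> i \<longrightarrow> i \<le> j \<longrightarrow> j \<le> CARD('n) \<longrightarrow> s j \<le> s i"
      using Ps unfolding P_def by blast
    have P2: "\<forall>i. 1 \<le> i \<longrightarrow> i \<le> CARD('n) \<longrightarrow> 0 \<le> s i"
      using Ps unfolding P_def by blast
    have P3: "\<forall>i. (i = 0 \<or> CARD('n) < i) \<longrightarrow> s i = 0"
      using Ps unfolding P_def by blast
    have P4: "\<forall>x::real. det (x *\<^sub>R mat 1 - transpose A ** A) = (\<Prod>i=1..CARD('n). x - (s i)\<^sup>2)"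
      using Ps unfolding P_def by blast
    show "s i = s0 i"
    proof (cases "i \<in> {1..CARD('n)}")
      case False
      hence "i = 0 \<or> CARD('n) < i" by auto
      hence "s i = 0" using P3 by blast
      moreover have "s0 i = 0" unfolding s0_def using False by (rule if_not_P)
      ultimately show ?thesis by simp
    next
      case True
      have d2: "\<forall>i j. 1 \<le> i \<longrightarrow> i \<le> j \<longrightarrow> j \<le> CARD('n) \<longrightarrow> (s j)\<^sup>2 \<le> (s i)\<^sup>2"
      proof (intro allI impI)
        fix i j assume h: "1 \<le> i" "i \<le> j" "j \<le> CARD('n)"
        hence "s j \<le> s i" "0 \<le> s j" using P1 P2 by auto
        thus "(s j)\<^sup>2 \<le> (s i)\<^sup>2" by (rule power_mono)
      qed
      have "\<forall>x. (\<Prod>i=1..CARD('n). x - (s i)\<^sup>2) = (\<Prod>i=1..CARD('n). x - \<mu> i)"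
        using P4 dc by metis
      hence "\<forall>i\<in>{1..CARD('n)}. (s i)\<^sup>2 = \<mu> i"
        using roots_unique[OF d2 desc] by blast
      hence "(s i)\<^sup>2 = \<mu> i" using True by blast
      moreover have "s i \<ge> 0" using P2 True by auto
      ultimately have "s i = sqrt (\<mu> i)" by (metis real_sqrt_abs abs_of_nonneg)
      moreover have "s0 i = sqrt (\<mu> i)" unfolding s0_def using True by (rule if_P)
      ultimately show ?thesis by simp
    qed
  qed
  have "sing_vals A = (THE s. P s)" unfolding sing_vals_def P_def by (rule refl)
  also have "(THE s. P s) = s0" using Ps0 uniq by (rule the_equality)
  finally have "sing_vals A = s0" .
  show ?thesis
  proof
    fix i assume i: "i \<in> {1..CARD('n)}"
    have "sing_vals A i = sqrt (\<mu> i)" unfolding \<open>sing_vals A = s0\<close> s0_def using i by (rule if_P)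
    thus "sing_vals A i = sqrt (\<mu> i) \<and> \<mu> i \<ge> 0" using mu0[OF i] by blast
  qed
qed

definition outer :: "real^'n \<Rightarrow> real^'n \<Rightarrow> real^'n^'n" where
  "outer x y = (\<chi> a b. x$a * y$b)"

definition Pm :: "nat \<Rightarrow> (nat \<Rightarrow> real^'n) \<Rightarrow> real^'n^'n" where
  "Pm m u = (\<Sum>j=1..m. outer (u j) (u j))"

lemma inner_outer_outer: "inner (outer x x) (outer y y) = (x \<bullet> y)\<^sup>2"
proof -
  have "inner (outer x x) (outer y y) = (\<Sum>a\<in>UNIV. \<Sum>b\<in>UNIV. (x$a*x$b) * (y$a*y$b))"
    unfolding inner_vec_def outer_def by simp
  also have "\<dots> = (\<Sum>a\<in>UNIV. \<Sum>b\<in>UNIV. (x$a*y$a) * (x$b*y$b))"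
    by (intro sum.cong refl) (simp add: algebra_simps)
  also have "\<dots> = (\<Sum>a\<in>UNIV. x$a*y$a) * (\<Sum>b\<in>UNIV. x$b*y$b)"
    by (simp add: sum_product)
  also have "\<dots> = (x \<bullet> y)\<^sup>2"
    unfolding power2_eq_square inner_vec_def by simp
  finally show ?thesis .
qed

lemma inner_mat_outer:
  fixes N :: "real^'n^'n"
  shows "inner N (outer x x) = x \<bullet> (N *v x)"
proof -
  have "inner N (outer x x) = (\<Sum>a\<in>UNIV. \<Sum>b\<in>UNIV. N$a$b * (x$a * x$b))"
    unfolding inner_vec_def outer_def by simp
  also have "\<dots> = (\<Sum>a\<in>UNIV. x$a * (\<Sum>b\<in>UNIV. N$a$b * x$b))"
    by (simp only: sum_distrib_left) (intro sum.cong refl, simp add: algebra_simps)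
  also have "\<dots> = x \<bullet> (N *v x)"
    unfolding inner_vec_def matrix_vector_mult_def by simp
  finally show ?thesis .
qed

lemma inner_Pm:
  fixes N :: "real^'n^'n"
  shows "inner N (Pm m u) = (\<Sum>j=1..m. u j \<bullet> (N *v u j))"
  by (simp add: Pm_def inner_sum_right inner_mat_outer)

lemma Pm_inner: "inner (Pm m u) (Pm m' w) = (\<Sum>i=1..m. \<Sum>j=1..m'. (u i \<bullet> w j)\<^sup>2)"
  apply (simp add: Pm_def inner_sum_left inner_sum_right inner_outer_outer)
  apply (rule sum.swap)
  done

lemma Pm_self:
  assumes "orthonormal_on {1..m} u"
  shows "inner (Pm m u) (Pm m u) = m"
proof -
  have "inner (Pm m u) (Pm m u) = (\<Sum>i=1..m. \<Sum>j=1..m. (u i \<bullet> u j)\<^sup>2)" by (rule Pm_inner)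
  also have "\<dots> = (\<Sum>i=1..m. \<Sum>j=1..m. if i = j then 1 else 0)"
    using assms by (intro sum.cong refl) (simp add: orthonormal_on_def)
  also have "\<dots> = (\<Sum>i=1..m. 1)" by (intro sum.cong refl) simp
  finally show ?thesis by simp
qed

lemma Pm_dist:
  assumes u: "orthonormal_on {1..m} u" and w: "orthonormal_on {1..m} w"
  shows "(norm (Pm m u - Pm m w))\<^sup>2 = 2 * (m - (\<Sum>i=1..m. \<Sum>j=1..m. (w i \<bullet> u j)\<^sup>2))"
proof -
  have uw: "inner (Pm m u) (Pm m w) = (\<Sum>i=1..m. \<Sum>j=1..m. (w i \<bullet> u j)\<^sup>2)"
  proof -
    have "inner (Pm m u) (Pm m w) = (\<Sum>i=1..m. \<Sum>j=1..m. (u i \<bullet> w j)\<^sup>2)" by (rule Pm_inner)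
    also have "\<dots> = (\<Sum>j=1..m. \<Sum>i=1..m. (u i \<bullet> w j)\<^sup>2)" by (rule sum.swap)
    also have "\<dots> = (\<Sum>i=1..m. \<Sum>j=1..m. (w i \<bullet> u j)\<^sup>2)" by (simp add: inner_commute)
    finally show ?thesis .
  qed
  have "(norm (Pm m u - Pm m w))\<^sup>2 = inner (Pm m u) (Pm m u) - 2 * inner (Pm m u) (Pm m w) + inner (Pm m w) (Pm m w)"
    by (simp add: power2_norm_eq_inner inner_diff_left inner_diff_right inner_commute)
  thus ?thesis using Pm_self[OF u] Pm_self[OF w] uw by simp
qed

lemma KF_eq:
  fixes M :: "real^'n^'n"
  assumes on: "orthonormal_on {1..m} v" and eig: "\<forall>i\<in>{1..m}. M *v v i = \<mu> i *\<^sub>R v i"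
  shows "inner M (Pm m v) = (\<Sum>i=1..m. \<mu> i)"
proof -
  have "inner M (Pm m v) = (\<Sum>j=1..m. v j \<bullet> (M *v v j))" by (rule inner_Pm)
  also have "\<dots> = (\<Sum>j=1..m. \<mu> j)"
  proof (intro sum.cong refl)
    fix j assume j: "j \<in> {1..m}"
    have "v j \<bullet> v j = 1" using on j unfolding orthonormal_on_def by (metis (full_types))
    thus "v j \<bullet> (M *v v j) = \<mu> j" using eig j by simp
  qed
  finally show ?thesis .
qed

lemma KF:
  fixes M :: "real^'n^'n" and v u :: "nat \<Rightarrow> real^'n"
  assumes on: "orthonormal_on {1..CARD('n)} v" and eig: "\<forall>i\<in>{1..CARD('n)}. M *v v i = \<mu> i *\<^sub>R v i"
    and onu: "orthonormal_on {1..m} u" and mn: "m \<le> CARD('n)"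
    and al: "\<forall>i\<in>{1..m}. \<alpha> \<le> \<mu> i" and be: "\<forall>i\<in>{Suc m..CARD('n)}. \<mu> i \<le> \<alpha> - \<delta>"
  shows "inner M (Pm m u) \<le> (\<Sum>i=1..m. \<mu> i) - \<delta> * (m - (\<Sum>i=1..m. \<Sum>j=1..m. (v i \<bullet> u j)\<^sup>2))"
proof -
  define n where "n = CARD('n)"
  define w where "w i = (\<Sum>j=1..m. (v i \<bullet> u j)\<^sup>2)" for i
  define W where "W = (\<Sum>i=1..m. w i)"
  have "inner M (Pm m u) = (\<Sum>j=1..m. u j \<bullet> (M *v u j))" by (rule inner_Pm)
  also have "\<dots> = (\<Sum>j=1..m. \<Sum>i=1..n. \<mu> i * (v i \<bullet> u j)\<^sup>2)"
    unfolding n_def by (intro sum.cong refl quad_spectral[OF on eig])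
  also have "\<dots> = (\<Sum>i=1..n. \<Sum>j=1..m. \<mu> i * (v i \<bullet> u j)\<^sup>2)" by (rule sum.swap)
  also have "\<dots> = (\<Sum>i=1..n. \<mu> i * w i)" by (simp add: w_def sum_distrib_left)
  finally have Q: "inner M (Pm m u) = (\<Sum>i=1..n. \<mu> i * w i)" .
  have w0: "0 \<le> w i" for i unfolding w_def by (intro sum_nonneg) simp
  have w1: "w i \<le> 1" if i: "i \<in> {1..n}" for i
  proof -
    have "w i = (\<Sum>j=1..m. (u j \<bullet> v i)\<^sup>2)" by (simp add: w_def inner_commute)
    also have "\<dots> \<le> v i \<bullet> v i" by (rule bessel[OF onu])
    also have "v i \<bullet> v i = 1" using on i unfolding orthonormal_on_def n_def by (metis (full_types))
    finally show ?thesis .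
  qed
  have wsum: "(\<Sum>i=1..n. w i) = m"
  proof -
    have "(\<Sum>i=1..n. w i) = (\<Sum>j=1..m. \<Sum>i=1..n. (v i \<bullet> u j)\<^sup>2)"
      unfolding w_def by (rule sum.swap)
    also have "\<dots> = (\<Sum>j=1..m. u j \<bullet> u j)" unfolding n_def by (intro sum.cong refl parseval[OF on])
    also have "\<dots> = (\<Sum>j=1..m. 1)"
      using onu by (intro sum.cong refl) (simp add: orthonormal_on_def)
    finally show ?thesis by simp
  qed
  have split: "(\<Sum>i=1..n. f i) = (\<Sum>i=1..m. f i) + (\<Sum>i=Suc m..n. f i)" for f :: "nat \<Rightarrow> real"
  proof -
    have "{1..n} = {1..m} \<union> {Suc m..n}" using mn by (auto simp: n_def)
    moreover have "{1..m} \<inter> {Suc m..n} = {}" by auto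
    ultimately show ?thesis by (simp add: sum.union_disjoint)
  qed
  have hi: "(\<Sum>i=Suc m..n. w i) = m - W" using wsum split[of w] by (simp add: W_def)
  have lo: "(\<Sum>i=1..m. 1 - w i) = m - W" by (simp add: W_def sum_subtractf)
  have A1: "(\<Sum>i=1..m. \<mu> i * w i) \<le> (\<Sum>i=1..m. \<mu> i) - \<alpha> * (m - W)"
  proof -
    have "(\<Sum>i=1..m. \<alpha> * (1 - w i)) = \<alpha> * (\<Sum>i=1..m. (1 - w i))" by (rule sum_distrib_left[symmetric])
    hence "\<alpha> * (m - W) = (\<Sum>i=1..m. \<alpha> * (1 - w i))" by (simp only: lo)
    also have "\<dots> \<le> (\<Sum>i=1..m. \<mu> i * (1 - w i))"
    proof (intro sum_mono mult_right_mono)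
      fix i assume i: "i \<in> {1..m}"
      show "\<alpha> \<le> \<mu> i" using al i by blast
      have "i \<in> {1..n}" using i mn by (auto simp: n_def)
      thus "0 \<le> 1 - w i" using w1 by simp
    qed
    also have "\<dots> = (\<Sum>i=1..m. \<mu> i) - (\<Sum>i=1..m. \<mu> i * w i)"
      by (simp add: algebra_simps sum_subtractf)
    finally show ?thesis by simp
  qed
  have A2: "(\<Sum>i=Suc m..n. \<mu> i * w i) \<le> (\<alpha> - \<delta>) * (m - W)"
  proof -
    have "(\<Sum>i=Suc m..n. \<mu> i * w i) \<le> (\<Sum>i=Suc m..n. (\<alpha> - \<delta>) * w i)"
    proof (intro sum_mono mult_right_mono)
      fix i assume i: "i \<in> {Suc m..n}"
      show "\<mu> i \<le> \<alpha> - \<delta>" using be i by (simp add: n_def)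
      show "0 \<le> w i" by (rule w0)
    qed
    also have "\<dots> = (\<alpha> - \<delta>) * (m - W)" by (simp add: hi sum_distrib_left[symmetric])
    finally show ?thesis .
  qed
  have "inner M (Pm m u) = (\<Sum>i=1..m. \<mu> i * w i) + (\<Sum>i=Suc m..n. \<mu> i * w i)"
    using Q split[of "\<lambda>i. \<mu> i * w i"] by simp
  also have "\<dots> \<le> (\<Sum>i=1..m. \<mu> i) - \<delta> * (m - W)"
    using A1 A2 by (simp add: algebra_simps)
  finally show ?thesis by (simp add: W_def w_def)
qed

lemma slope_swap: "((a::real) - b) / (c - d) = (b - a) / (d - c)"
  by (metis minus_diff_eq minus_divide_divide)

lemma convex_onesided:
  fixes f :: "real \<Rightarrow> real"
  assumes cf: "convex_on UNIV f"
  shows "\<exists>L R. (f has_real_derivative L) (at t within {..t}) \<and>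
     (f has_real_derivative R) (at t within {t..}) \<and> L \<le> R"
proof -
  define q where "q y = (f y - f t) / (y - t)" for y
  have mono: "q y1 \<le> q y2" if y: "y1 < y2" "y1 \<noteq> t" "y2 \<noteq> t" for y1 y2
  proof -
    consider "y2 < t" | "y1 < t" "t < y2" | "t < y1" using y by linarith
    thus ?thesis
    proof cases
      case 1
      have "(f y1 - f t) / (y1 - t) \<le> (f y2 - f t) / (y2 - t)"
        using convex_on_slope_le(2)[OF cf _ _ y(1) 1] slope_swap[of "f y2" "f t" y2 t] by simp
      thus ?thesis by (simp add: q_def)
    next
      case 2
      have "(f y1 - f t) / (y1 - t) \<le> (f y2 - f t) / (y2 - t)"
        using convex_on_slope_le[OF cf _ _ 2] slope_swap[of "f y2" "f t" y2 t] by simp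
      thus ?thesis by (simp add: q_def)
    next
      case 3
      have "(f y1 - f t) / (y1 - t) \<le> (f y2 - f t) / (y2 - t)"
        using convex_on_slope_le(1)[OF cf _ _ 3 y(1)] slope_swap[of "f y2" "f t" y2 t]
          slope_swap[of "f y1" "f t" y1 t] by simp
      thus ?thesis by (simp add: q_def)
    qed
  qed
  define R where "R = Inf (q ` {t<..})"
  define L where "L = Sup (q ` {..<t})"
  have bddR: "bdd_below (q ` {t<..})"
    by (rule bdd_belowI[of _ "q (t - 1)"]) (auto intro: mono)
  have bddL: "bdd_above (q ` {..<t})"
    by (rule bdd_aboveI[of _ "q (t + 1)"]) (auto intro: mono)
  have neR: "q ` {t<..} \<noteq> {}" and neL: "q ` {..<t} \<noteq> {}" by auto
  have Lz: "L \<le> q z" if "z > t" for z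
    unfolding L_def by (rule cSup_least[OF neL]) (use that in \<open>auto intro: mono\<close>)
  have LR: "L \<le> R" unfolding R_def by (rule cInf_greatest[OF neR]) (auto intro: Lz)
  have right: "(q \<longlongrightarrow> R) (at_right t)"
  proof (rule order_tendstoI)
    fix a assume "a < R"
    have "q y \<ge> R" if "y > t" for y unfolding R_def by (rule cInf_lower) (use that bddR in auto)
    hence "\<forall>y. y \<in> {t<..} \<longrightarrow> a < q y" using \<open>a < R\<close> by force
    thus "\<forall>\<^sub>F y in at_right t. a < q y"
      by (auto simp: eventually_at_right_less eventually_at_filter intro!: eventually_at_rightI[of t "t+1"])
  next
    fix a assume "R < a"
    then obtain y0 where y0: "y0 > t" "q y0 < a"
      unfolding R_def using cInf_less_iff[OF neR bddR] by auto
    show "\<forall>\<^sub>F y in at_right t. q y < a"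
      using eventually_at_right_real[OF y0(1)]
    proof (rule eventually_mono)
      fix y assume "y \<in> {t<..<y0}"
      hence "q y \<le> q y0" by (intro mono) auto
      thus "q y < a" using y0 by simp
    qed
  qed
  have left: "(q \<longlongrightarrow> L) (at_left t)"
  proof (rule order_tendstoI)
    fix a assume "L < a"
    have "q y \<le> L" if "y < t" for y unfolding L_def by (rule cSup_upper) (use that bddL in auto)
    hence "\<forall>y. y \<in> {..<t} \<longrightarrow> q y < a" using \<open>L < a\<close> by force
    thus "\<forall>\<^sub>F y in at_left t. q y < a"
      using eventually_at_left_real[of "t - 1" t] by (auto elim!: eventually_mono)
  next
    fix a assume "a < L"
    then obtain y0 where y0: "y0 < t" "a < q y0"
      unfolding L_def using less_cSup_iff[OF neL bddL] by auto
    show "\<forall>\<^sub>F y in at_left t. a < q y"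
      using eventually_at_left_real[OF y0(1)]
    proof (rule eventually_mono)
      fix y assume "y \<in> {y0<..<t}"
      hence "q y0 \<le> q y" by (intro mono) auto
      thus "a < q y" using y0 by simp
    qed
  qed
  have qe: "q = (\<lambda>y. (f y - f t) / (y - t))" by (rule ext) (simp add: q_def)
  have "(f has_real_derivative L) (at t within {..t})"
    unfolding has_field_derivative_iff at_within_Iic_at_left using left by (simp only: qe)
  moreover have "(f has_real_derivative R) (at t within {t..})"
    unfolding has_field_derivative_iff at_within_Ici_at_right using right by (simp only: qe)
  ultimately show ?thesis using LR by blast
qed

lemma orthonormal_on_subset: "K' \<subseteq> K \<Longrightarrow> orthonormal_on K v \<Longrightarrow> orthonormal_on K' v"
  unfolding orthonormal_on_def by blast

lemma spec_at:
  fixes A :: "real^'n^'n"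
  obtains v \<mu> where "orthonormal_on {1..CARD('n)} v"
    "\<forall>i\<in>{1..CARD('n)}. (transpose A ** A) *v v i = \<mu> i *\<^sub>R v i"
    "\<forall>i j. 1 \<le> i \<longrightarrow> i \<le> j \<longrightarrow> j \<le> CARD('n) \<longrightarrow> \<mu> j \<le> \<mu> i"
    "\<forall>i\<in>{1..CARD('n)}. (sing_vals A i)\<^sup>2 = \<mu> i \<and> sing_vals A i \<ge> 0"
proof -
  have sym: "transpose (transpose A ** A) = transpose A ** A" by (simp add: matrix_transpose_mul)
  obtain v \<mu> where on: "orthonormal_on {1..CARD('n)} v"
    and eig: "\<forall>i\<in>{1..CARD('n)}. (transpose A ** A) *v v i = \<mu> i *\<^sub>R v i"
    and desc: "\<forall>i j. 1 \<le> i \<longrightarrow> i \<le> j \<longrightarrow> j \<le> CARD('n) \<longrightarrow> \<mu> j \<le> \<mu> i"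
    using spectral[OF sym] by blast
  have "\<forall>i\<in>{1..CARD('n)}. sing_vals A i = sqrt (\<mu> i) \<and> \<mu> i \<ge> 0" by (rule sing_vals_char[OF on eig desc])
  hence "\<forall>i\<in>{1..CARD('n)}. (sing_vals A i)\<^sup>2 = \<mu> i \<and> sing_vals A i \<ge> 0" by auto
  thus ?thesis using that on eig desc by blast
qed

lemma inner_AtA_outer:
  fixes A :: "real^'n^'n"
  shows "inner (transpose A ** A) (outer x x) = (norm (A *v x))\<^sup>2"
  by (simp add: inner_mat_outer quad_AtA)

lemma inner_AtA_Pm:
  fixes A :: "real^'n^'n"
  shows "inner (transpose A ** A) (Pm m u) = (\<Sum>j=1..m. (norm (A *v u j))\<^sup>2)"
  by (simp add: Pm_def inner_sum_right inner_AtA_outer)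

lemma SS_eq:
  fixes A :: "real^'n^'n"
  assumes on: "orthonormal_on {1..CARD('n)} v"
    and eig: "\<forall>i\<in>{1..CARD('n)}. (transpose A ** A) *v v i = \<mu> i *\<^sub>R v i"
    and sv: "\<forall>i\<in>{1..CARD('n)}. (sing_vals A i)\<^sup>2 = \<mu> i \<and> sing_vals A i \<ge> 0"
    and mn: "m \<le> CARD('n)"
  shows "(\<Sum>i=1..m. (sing_vals A i)\<^sup>2) = inner (transpose A ** A) (Pm m v)"
proof -
  have sub: "{1..m} \<subseteq> {1..CARD('n)}" using mn by auto
  have "inner (transpose A ** A) (Pm m v) = (\<Sum>i=1..m. \<mu> i)"
    by (rule KF_eq) (use orthonormal_on_subset[OF sub on] eig sub in auto)
  also have "\<dots> = (\<Sum>i=1..m. (sing_vals A i)\<^sup>2)"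
    using sv sub by (intro sum.cong refl) auto
  finally show ?thesis by simp
qed

lemma SS_max:
  fixes A :: "real^'n^'n"
  assumes onu: "orthonormal_on {1..m} u" and mn: "m \<le> CARD('n)"
  shows "inner (transpose A ** A) (Pm m u) \<le> (\<Sum>i=1..m. (sing_vals A i)\<^sup>2)"
proof -
  obtain v \<mu> where on: "orthonormal_on {1..CARD('n)} v"
    and eig: "\<forall>i\<in>{1..CARD('n)}. (transpose A ** A) *v v i = \<mu> i *\<^sub>R v i"
    and desc: "\<forall>i j. 1 \<le> i \<longrightarrow> i \<le> j \<longrightarrow> j \<le> CARD('n) \<longrightarrow> \<mu> j \<le> \<mu> i"
    and sv: "\<forall>i\<in>{1..CARD('n)}. (sing_vals A i)\<^sup>2 = \<mu> i \<and> sing_vals A i \<ge> 0"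
    by (rule spec_at)
  define \<alpha> where "\<alpha> = (if m = 0 then \<mu> 1 else \<mu> m)"
  have al: "\<forall>i\<in>{1..m}. \<alpha> \<le> \<mu> i" using desc mn by (auto simp: \<alpha>_def)
  have be: "\<forall>i\<in>{Suc m..CARD('n)}. \<mu> i \<le> \<alpha> - 0" using desc by (auto simp: \<alpha>_def)
  have "inner (transpose A ** A) (Pm m u) \<le> (\<Sum>i=1..m. \<mu> i) - 0 * (m - (\<Sum>i=1..m. \<Sum>j=1..m. (v i \<bullet> u j)\<^sup>2))"
    by (rule KF[OF on eig onu mn al be])
  also have "\<dots> = (\<Sum>i=1..m. \<mu> i)" by simp
  also have "\<dots> = (\<Sum>i=1..m. (sing_vals A i)\<^sup>2)"
    by (intro sum.cong refl) (use sv mn in auto)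
  finally show ?thesis .
qed

lemma quad_norm_convex:
  fixes X Y :: "'a::real_inner"
  assumes t: "0 \<le> t" "t \<le> 1"
  shows "(norm (X + ((1 - t) * x + t * y) *\<^sub>R Y))\<^sup>2 \<le>
     (1 - t) * (norm (X + x *\<^sub>R Y))\<^sup>2 + t * (norm (X + y *\<^sub>R Y))\<^sup>2"
proof -
  define a where "a = X \<bullet> X"
  define b where "b = X \<bullet> Y"
  define c where "c = Y \<bullet> Y"
  have ex: "(norm (X + s *\<^sub>R Y))\<^sup>2 = a + 2 * s * b + s\<^sup>2 * c" for s
  proof -
    have "(norm (X + s *\<^sub>R Y))\<^sup>2 = (X + s *\<^sub>R Y) \<bullet> (X + s *\<^sub>R Y)" by (rule power2_norm_eq_inner)
    also have "\<dots> = a + 2 * s * b + s\<^sup>2 * c"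
      by (simp add: inner_add_left inner_add_right a_def b_def c_def inner_commute power2_eq_square algebra_simps)
    finally show ?thesis .
  qed
  have c0: "c \<ge> 0" by (simp add: c_def)
  define z where "z = (1 - t) * x + t * y"
  have "(1 - t) * (a + 2 * x * b + x\<^sup>2 * c) + t * (a + 2 * y * b + y\<^sup>2 * c) - (a + 2 * z * b + z\<^sup>2 * c)
      = c * (t * (1 - t) * (x - y)\<^sup>2)"
    by (simp add: z_def power2_eq_square algebra_simps)
  moreover have "c * (t * (1 - t) * (x - y)\<^sup>2) \<ge> 0" using c0 t by simp
  ultimately show ?thesis unfolding ex z_def[symmetric] by linarith
qed

lemma matvec_family:
  fixes F H :: "real^'n^'m"
  shows "(F + s *\<^sub>R H) *v x = F *v x + s *\<^sub>R (H *v x)"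
  by (simp add: matrix_vector_mult_add_rdistrib scaleR_matrix_vector_assoc)

lemma SS_convex:
  fixes F H :: "real^'n^'n"
  assumes mn: "m \<le> CARD('n)"
  shows "convex_on UNIV (\<lambda>s. \<Sum>i=1..m. (sing_vals (F + s *\<^sub>R H) i)\<^sup>2)"
proof (rule convex_onI)
  fix t x y :: real assume t: "0 < t" "t < 1"
  define z where "z = (1 - t) *\<^sub>R x + t *\<^sub>R y"
  obtain v \<mu> where on: "orthonormal_on {1..CARD('n)} v"
    and eig: "\<forall>i\<in>{1..CARD('n)}. (transpose (F + z *\<^sub>R H) ** (F + z *\<^sub>R H)) *v v i = \<mu> i *\<^sub>R v i"
    and sv: "\<forall>i\<in>{1..CARD('n)}. (sing_vals (F + z *\<^sub>R H) i)\<^sup>2 = \<mu> i \<and> sing_vals (F + z *\<^sub>R H) i \<ge> 0"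
    by (rule spec_at)
  have onm: "orthonormal_on {1..m} v" using orthonormal_on_subset[OF _ on] mn by auto
  have G: "inner (transpose (F + s *\<^sub>R H) ** (F + s *\<^sub>R H)) (Pm m v) =
      (\<Sum>j=1..m. (norm (F *v v j + s *\<^sub>R (H *v v j)))\<^sup>2)" for s
    by (simp add: inner_AtA_Pm matvec_family)
  have "(\<Sum>i=1..m. (sing_vals (F + z *\<^sub>R H) i)\<^sup>2) = (\<Sum>j=1..m. (norm (F *v v j + z *\<^sub>R (H *v v j)))\<^sup>2)"
    using SS_eq[OF on eig sv mn] G by simp
  also have "\<dots> \<le> (\<Sum>j=1..m. (1 - t) * (norm (F *v v j + x *\<^sub>R (H *v v j)))\<^sup>2 +
                                t * (norm (F *v v j + y *\<^sub>R (H *v v j)))\<^sup>2)"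
    unfolding z_def using t by (intro sum_mono) (simp add: quad_norm_convex)
  also have "\<dots> = (1 - t) * inner (transpose (F + x *\<^sub>R H) ** (F + x *\<^sub>R H)) (Pm m v) +
                  t * inner (transpose (F + y *\<^sub>R H) ** (F + y *\<^sub>R H)) (Pm m v)"
    by (simp add: G sum.distrib sum_distrib_left)
  also have "\<dots> \<le> (1 - t) * (\<Sum>i=1..m. (sing_vals (F + x *\<^sub>R H) i)\<^sup>2) +
                  t * (\<Sum>i=1..m. (sing_vals (F + y *\<^sub>R H) i)\<^sup>2)"
    using t by (intro add_mono mult_left_mono SS_max[OF onm mn]) auto
  finally show "(\<Sum>i=1..m. (sing_vals (F + ((1 - t) *\<^sub>R x + t *\<^sub>R y) *\<^sub>R H) i)\<^sup>2)
      \<le> (1 - t) * (\<Sum>i=1..m. (sing_vals (F + x *\<^sub>R H) i)\<^sup>2) + t * (\<Sum>i=1..m. (sing_vals (F + y *\<^sub>R H) i)\<^sup>2)"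
    by (simp add: z_def)
qed simp

lemma deriv_from_quad:
  fixes f :: "real \<Rightarrow> real"
  assumes bound: "\<And>s. \<bar>s - t\<bar> \<le> 1 \<Longrightarrow> \<bar>f s - f t - b * (s - t)\<bar> \<le> K * (s - t)\<^sup>2"
  shows "(f has_real_derivative b) (at t)"
proof -
  have ev0: "\<forall>\<^sub>F y in at t. y \<in> ball t 1 \<and> y \<noteq> t \<and> y \<in> UNIV"
    by (rule eventually_at_ball') simp
  have ev: "\<forall>\<^sub>F y in at t. norm ((f y - f t) / (y - t) - b) \<le> K * \<bar>y - t\<bar>"
    using ev0
  proof (rule eventually_mono)
    fix y assume "y \<in> ball t 1 \<and> y \<noteq> t \<and> y \<in> UNIV"
    hence y: "\<bar>y - t\<bar> < 1" "y \<noteq> t" by (auto simp: dist_real_def abs_minus_commute)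
    have yt: "\<bar>y - t\<bar> > 0" using y by simp
    have "(f y - f t) / (y - t) - b = (f y - f t - b * (y - t)) / (y - t)" using y by (simp add: field_simps)
    hence "norm ((f y - f t) / (y - t) - b) = \<bar>f y - f t - b * (y - t)\<bar> / \<bar>y - t\<bar>" by simp
    also have "\<dots> \<le> K * (y - t)\<^sup>2 / \<bar>y - t\<bar>"
      by (intro divide_right_mono bound) (use y in auto)
    also have "K * (y - t)\<^sup>2 / \<bar>y - t\<bar> = K * \<bar>y - t\<bar>"
      using yt by (simp add: field_simps power2_eq_square)
    finally show "norm ((f y - f t) / (y - t) - b) \<le> K * \<bar>y - t\<bar>" .
  qed
  have "((\<lambda>y. K * \<bar>y - t\<bar>) \<longlongrightarrow> K * \<bar>t - t\<bar>) (at t)" by (intro tendsto_intros)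
  hence "((\<lambda>y. K * \<bar>y - t\<bar>) \<longlongrightarrow> 0) (at t)" by simp
  from Lim_null_comparison[OF ev this]
  have "((\<lambda>y. (f y - f t) / (y - t)) \<longlongrightarrow> b) (at t)" by (simp add: Lim_null[of _ b])
  thus ?thesis by (simp add: has_field_derivative_iff)
qed

lemma expand_family:
  fixes X H :: "real^'n^'n"
  shows "(norm ((X + h *\<^sub>R H) *v x))\<^sup>2 = (norm (X *v x))\<^sup>2 + 2 * h * (x \<bullet> ((transpose X ** H) *v x))
     + h\<^sup>2 * (x \<bullet> ((transpose H ** H) *v x))"
proof -
  have a: "x \<bullet> ((transpose X ** H) *v x) = (X *v x) \<bullet> (H *v x)"
  proof -
    have "x \<bullet> ((transpose X ** H) *v x) = x \<bullet> (transpose X *v (H *v x))"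
      by (simp only: matrix_vector_mul_assoc)
    also have "\<dots> = (X *v x) \<bullet> (H *v x)" by (rule inner_transpose_mult)
    finally show ?thesis .
  qed
  have c: "x \<bullet> ((transpose H ** H) *v x) = (H *v x) \<bullet> (H *v x)"
    using quad_AtA[of x H] by (simp add: power2_norm_eq_inner)
  have "(norm ((X + h *\<^sub>R H) *v x))\<^sup>2 = (X *v x + h *\<^sub>R (H *v x)) \<bullet> (X *v x + h *\<^sub>R (H *v x))"
    by (simp only: matvec_family power2_norm_eq_inner)
  also have "\<dots> = (X *v x) \<bullet> (X *v x) + 2 * h * ((X *v x) \<bullet> (H *v x)) + h\<^sup>2 * ((H *v x) \<bullet> (H *v x))"
    by (simp add: inner_add_left inner_add_right inner_commute power2_eq_square algebra_simps)
  finally show ?thesis using a c by (simp add: power2_norm_eq_inner)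
qed

lemma expand_Pm:
  fixes X H :: "real^'n^'n"
  shows "inner (transpose (X + h *\<^sub>R H) ** (X + h *\<^sub>R H)) (Pm m u) =
    inner (transpose X ** X) (Pm m u) + 2 * h * inner (transpose X ** H) (Pm m u)
     + h\<^sup>2 * inner (transpose H ** H) (Pm m u)"
proof -
  have "inner (transpose (X + h *\<^sub>R H) ** (X + h *\<^sub>R H)) (Pm m u) =
      (\<Sum>j=1..m. (norm ((X + h *\<^sub>R H) *v u j))\<^sup>2)" by (rule inner_AtA_Pm)
  also have "\<dots> = (\<Sum>j=1..m. (norm (X *v u j))\<^sup>2 + 2 * h * (u j \<bullet> ((transpose X ** H) *v u j))
     + h\<^sup>2 * (u j \<bullet> ((transpose H ** H) *v u j)))"
    by (intro sum.cong refl expand_family)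
  also have "\<dots> = inner (transpose X ** X) (Pm m u) + 2 * h * inner (transpose X ** H) (Pm m u)
     + h\<^sup>2 * inner (transpose H ** H) (Pm m u)"
    by (simp add: inner_AtA_Pm inner_Pm quad_AtA sum.distrib sum_distrib_left)
  finally show ?thesis .
qed

lemma quad_bound:
  fixes \<delta> r e a K :: real
  assumes d: "\<delta> > 0" and r2: "r\<^sup>2 = 2 * e"
  shows "- \<delta> * e + a * K * r \<le> a\<^sup>2 * (K\<^sup>2 / (2 * \<delta>))"
proof -
  have e: "e = r\<^sup>2 / 2" using r2 by simp
  have "a\<^sup>2 * (K\<^sup>2 / (2 * \<delta>)) - (- \<delta> * e + a * K * r) = (\<delta> * r - a * K)\<^sup>2 / (2 * \<delta>)"
    using d unfolding e by (simp add: field_simps power2_eq_square)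
  moreover have "(\<delta> * r - a * K)\<^sup>2 / (2 * \<delta>) \<ge> 0" using d by simp
  ultimately show ?thesis by linarith
qed

lemma gap_deriv:
  fixes F H :: "real^'n^'n"
  assumes mn: "m \<le> CARD('n)" and d: "\<delta> > 0"
    and al: "\<forall>i\<in>{1..m}. \<alpha> \<le> (sing_vals (F + t *\<^sub>R H) i)\<^sup>2"
    and be: "\<forall>i\<in>{Suc m..CARD('n)}. (sing_vals (F + t *\<^sub>R H) i)\<^sup>2 \<le> \<alpha> - \<delta>"
  shows "\<exists>D. ((\<lambda>s. \<Sum>i=1..m. (sing_vals (F + s *\<^sub>R H) i)\<^sup>2) has_real_derivative D) (at t)"
proof -
  define S where "S s = (\<Sum>i=1..m. (sing_vals (F + s *\<^sub>R H) i)\<^sup>2)" for s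
  define X where "X = F + t *\<^sub>R H"
  obtain v \<mu> where on: "orthonormal_on {1..CARD('n)} v"
    and eig: "\<forall>i\<in>{1..CARD('n)}. (transpose X ** X) *v v i = \<mu> i *\<^sub>R v i"
    and sv: "\<forall>i\<in>{1..CARD('n)}. (sing_vals X i)\<^sup>2 = \<mu> i \<and> sing_vals X i \<ge> 0"
    by (rule spec_at)
  have sub: "{1..m} \<subseteq> {1..CARD('n)}" using mn by auto
  have onm: "orthonormal_on {1..m} v" by (rule orthonormal_on_subset[OF sub on])
  have al': "\<forall>i\<in>{1..m}. \<alpha> \<le> \<mu> i" using al sv sub by (auto simp: X_def)
  have be': "\<forall>i\<in>{Suc m..CARD('n)}. \<mu> i \<le> \<alpha> - \<delta>" using be sv by (auto simp: X_def)
  define P where "P = Pm m v"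
  define N where "N = transpose X ** H"
  define C where "C = transpose H ** H"
  define K where "K = 2 * norm N + norm C"
  have St: "S t = inner (transpose X ** X) P" using SS_eq[OF on eig sv mn] by (simp add: S_def X_def P_def)
  have Smu: "S t = (\<Sum>i=1..m. \<mu> i)" using St KF_eq[OF onm] eig sub by (auto simp: P_def)
  have fam: "F + s *\<^sub>R H = X + (s - t) *\<^sub>R H" for s by (simp add: X_def algebra_simps)
  have exP: "inner (transpose (F + s *\<^sub>R H) ** (F + s *\<^sub>R H)) P =
      S t + 2 * (s - t) * inner N P + (s - t)\<^sup>2 * inner C P" for s
    using expand_Pm[of X "s - t" H m v] St by (simp add: fam P_def N_def C_def)
  have lower: "0 \<le> S s - inner (transpose (F + s *\<^sub>R H) ** (F + s *\<^sub>R H)) P" for s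
    using SS_max[OF onm mn, of "F + s *\<^sub>R H"] by (simp add: S_def P_def)
  have upper: "S s - inner (transpose (F + s *\<^sub>R H) ** (F + s *\<^sub>R H)) P \<le> (s - t)\<^sup>2 * (K\<^sup>2 / (2 * \<delta>))"
    if hs: "\<bar>s - t\<bar> \<le> 1" for s
  proof -
    define h where "h = s - t"
    obtain w \<nu> where onw: "orthonormal_on {1..CARD('n)} w"
      and eigw: "\<forall>i\<in>{1..CARD('n)}. (transpose (F + s *\<^sub>R H) ** (F + s *\<^sub>R H)) *v w i = \<nu> i *\<^sub>R w i"
      and svw: "\<forall>i\<in>{1..CARD('n)}. (sing_vals (F + s *\<^sub>R H) i)\<^sup>2 = \<nu> i \<and> sing_vals (F + s *\<^sub>R H) i \<ge> 0"
      by (rule spec_at)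
    have onwm: "orthonormal_on {1..m} w" by (rule orthonormal_on_subset[OF sub onw])
    define e where "e = m - (\<Sum>i=1..m. \<Sum>j=1..m. (v i \<bullet> w j)\<^sup>2)"
    define r where "r = norm (Pm m w - P)"
    have r2: "r\<^sup>2 = 2 * e" using Pm_dist[OF onwm onm] by (simp add: r_def e_def P_def)
    have r0: "r \<ge> 0" by (simp add: r_def)
    have Ss: "S s = inner (transpose (F + s *\<^sub>R H) ** (F + s *\<^sub>R H)) (Pm m w)"
      using SS_eq[OF onw eigw svw mn] by (simp add: S_def)
    have exw: "inner (transpose (F + s *\<^sub>R H) ** (F + s *\<^sub>R H)) (Pm m w) =
        inner (transpose X ** X) (Pm m w) + 2 * h * inner N (Pm m w) + h\<^sup>2 * inner C (Pm m w)"
      using expand_Pm[of X h H m w] by (simp add: fam h_def N_def C_def)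
    have kf: "inner (transpose X ** X) (Pm m w) \<le> S t - \<delta> * e"
      using KF[OF on eig onwm mn al' be'] Smu by (simp add: e_def)
    have cs1: "\<bar>inner N (Pm m w - P)\<bar> \<le> norm N * r" unfolding r_def by (rule Cauchy_Schwarz_ineq2)
    have cs2: "\<bar>inner C (Pm m w - P)\<bar> \<le> norm C * r" unfolding r_def by (rule Cauchy_Schwarz_ineq2)
    have t1: "2 * h * inner N (Pm m w - P) \<le> 2 * \<bar>h\<bar> * (norm N * r)"
    proof -
      have "2 * h * inner N (Pm m w - P) \<le> \<bar>2 * h * inner N (Pm m w - P)\<bar>" by simp
      also have "\<dots> = 2 * \<bar>h\<bar> * \<bar>inner N (Pm m w - P)\<bar>" by (simp add: abs_mult)
      also have "\<dots> \<le> 2 * \<bar>h\<bar> * (norm N * r)" using cs1 by (intro mult_left_mono) auto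
      finally show ?thesis .
    qed
    have t2: "h\<^sup>2 * inner C (Pm m w - P) \<le> \<bar>h\<bar> * (norm C * r)"
    proof -
      have "h\<^sup>2 * inner C (Pm m w - P) \<le> h\<^sup>2 * \<bar>inner C (Pm m w - P)\<bar>"
        by (intro mult_left_mono) auto
      also have "\<dots> \<le> h\<^sup>2 * (norm C * r)" using cs2 by (intro mult_left_mono) auto
      also have "\<dots> \<le> \<bar>h\<bar> * (norm C * r)"
      proof (intro mult_right_mono)
        have "\<bar>h\<bar> \<le> 1" using hs by (simp add: h_def)
        hence "\<bar>h\<bar> * \<bar>h\<bar> \<le> 1 * \<bar>h\<bar>" by (intro mult_right_mono) auto
        thus "h\<^sup>2 \<le> \<bar>h\<bar>" by (simp add: power2_eq_square)
        show "0 \<le> norm C * r" using r0 by simp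
      qed
      finally show ?thesis .
    qed
    have "S s - inner (transpose (F + s *\<^sub>R H) ** (F + s *\<^sub>R H)) P =
        (inner (transpose X ** X) (Pm m w) - S t) + 2 * h * inner N (Pm m w - P) + h\<^sup>2 * inner C (Pm m w - P)"
      using Ss exw exP[of s] by (simp add: inner_diff_right h_def algebra_simps)
    also have "\<dots> \<le> - \<delta> * e + \<bar>h\<bar> * K * r"
      using kf t1 t2 by (simp add: K_def algebra_simps)
    also have "\<dots> \<le> \<bar>h\<bar>\<^sup>2 * (K\<^sup>2 / (2 * \<delta>))" by (rule quad_bound[OF d r2])
    finally show ?thesis by (simp add: h_def)
  qed
  define b where "b = 2 * inner N P"
  define K' where "K' = K\<^sup>2 / (2 * \<delta>) + \<bar>inner C P\<bar>"
  have "(S has_real_derivative b) (at t)"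
  proof (rule deriv_from_quad)
    fix s assume hs: "\<bar>s - t\<bar> \<le> 1"
    define \<phi> where "\<phi> = S s - inner (transpose (F + s *\<^sub>R H) ** (F + s *\<^sub>R H)) P"
    have "S s - S t - b * (s - t) = \<phi> + (s - t)\<^sup>2 * inner C P"
      using exP[of s] by (simp add: \<phi>_def b_def algebra_simps)
    hence "\<bar>S s - S t - b * (s - t)\<bar> \<le> \<bar>\<phi>\<bar> + \<bar>(s - t)\<^sup>2 * inner C P\<bar>"
      by (simp only: abs_triangle_ineq)
    also have "\<bar>(s - t)\<^sup>2 * inner C P\<bar> = (s - t)\<^sup>2 * \<bar>inner C P\<bar>" by (simp add: abs_mult)
    also have "\<bar>\<phi>\<bar> \<le> (s - t)\<^sup>2 * (K\<^sup>2 / (2 * \<delta>))"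
      using lower[of s] upper[OF hs] by (simp add: \<phi>_def)
    finally show "\<bar>S s - S t - b * (s - t)\<bar> \<le> K' * (s - t)\<^sup>2"
      by (simp add: K'_def algebra_simps)
  qed
  thus ?thesis unfolding S_def by blast
qed

lemma sv_props:
  fixes A :: "real^'n^'n"
  shows "\<forall>i\<in>{1..CARD('n)}. sing_vals A i \<ge> 0"
    and "\<forall>i k. 1 \<le> i \<longrightarrow> i \<le> k \<longrightarrow> k \<le> CARD('n) \<longrightarrow> sing_vals A k \<le> sing_vals A i"
proof -
  obtain v \<mu> where on: "orthonormal_on {1..CARD('n)} v"
    and eig: "\<forall>i\<in>{1..CARD('n)}. (transpose A ** A) *v v i = \<mu> i *\<^sub>R v i"
    and desc: "\<forall>i j. 1 \<le> i \<longrightarrow> i \<le> j \<longrightarrow> j \<le> CARD('n) \<longrightarrow> \<mu> j \<le> \<mu> i"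
    and sv: "\<forall>i\<in>{1..CARD('n)}. (sing_vals A i)\<^sup>2 = \<mu> i \<and> sing_vals A i \<ge> 0"
    by (rule spec_at)
  show "\<forall>i\<in>{1..CARD('n)}. sing_vals A i \<ge> 0" using sv by blast
  show "\<forall>i k. 1 \<le> i \<longrightarrow> i \<le> k \<longrightarrow> k \<le> CARD('n) \<longrightarrow> sing_vals A k \<le> sing_vals A i"
  proof (intro allI impI)
    fix i k assume h: "1 \<le> i" "i \<le> k" "k \<le> CARD('n)"
    hence "(sing_vals A k)\<^sup>2 \<le> (sing_vals A i)\<^sup>2" "sing_vals A i \<ge> 0"
      using desc sv by auto
    thus "sing_vals A k \<le> sing_vals A i" by (rule power2_le_imp_le)
  qed
qed

lemma sv_pos:
  fixes A :: "real^'n^'n"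
  assumes "det A \<noteq> 0" and i: "i \<in> {1..CARD('n)}"
  shows "sing_vals A i > 0"
proof -
  obtain v \<mu> where on: "orthonormal_on {1..CARD('n)} v"
    and eig: "\<forall>i\<in>{1..CARD('n)}. (transpose A ** A) *v v i = \<mu> i *\<^sub>R v i"
    and sv: "\<forall>i\<in>{1..CARD('n)}. (sing_vals A i)\<^sup>2 = \<mu> i \<and> sing_vals A i \<ge> 0"
    by (rule spec_at)
  have "invertible A" using assms(1) by (simp add: invertible_det_nz)
  then obtain B where "B ** A = mat 1" unfolding invertible_def by blast
  hence ker: "\<forall>x. A *v x = 0 \<longrightarrow> x = 0" using matrix_left_invertible_ker by blast
  have vv: "v i \<bullet> v i = 1" using on i unfolding orthonormal_on_def by (metis (full_types))
  hence "v i \<noteq> 0" by auto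
  hence Av: "A *v v i \<noteq> 0" using ker by blast
  have "(norm (A *v v i))\<^sup>2 = v i \<bullet> ((transpose A ** A) *v v i)" by (rule quad_AtA[symmetric])
  also have "\<dots> = \<mu> i" using eig i vv by simp
  finally have "\<mu> i > 0" using Av by (metis zero_less_norm_iff zero_less_power)
  hence "(sing_vals A i)\<^sup>2 > 0" using sv i by simp
  moreover have "sing_vals A i \<ge> 0" using sv i by blast
  ultimately show ?thesis by (metis less_eq_real_def power_zero_numeral zero_less_power2 order.strict_iff_not)
qed

lemma split_deriv:
  fixes F H :: "real^'n^'n"
  assumes mn: "m \<le> CARD('n)"
    and gap: "1 \<le> m \<and> m < CARD('n) \<longrightarrow> sing_vals (F + t *\<^sub>R H) (Suc m) < sing_vals (F + t *\<^sub>R H) m"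
  shows "\<exists>D. ((\<lambda>s. \<Sum>i=1..m. (sing_vals (F + s *\<^sub>R H) i)\<^sup>2) has_real_derivative D) (at t)"
proof -
  define \<sigma> where "\<sigma> i = sing_vals (F + t *\<^sub>R H) i" for i
  have nn: "\<forall>i\<in>{1..CARD('n)}. \<sigma> i \<ge> 0" unfolding \<sigma>_def by (rule sv_props(1))
  have ds: "\<forall>i k. 1 \<le> i \<longrightarrow> i \<le> k \<longrightarrow> k \<le> CARD('n) \<longrightarrow> \<sigma> k \<le> \<sigma> i" unfolding \<sigma>_def by (rule sv_props(2))
  have ds2: "(\<sigma> k)\<^sup>2 \<le> (\<sigma> i)\<^sup>2" if "1 \<le> i" "i \<le> k" "k \<le> CARD('n)" for i k
    using ds nn that by (intro power_mono) auto
  consider "m = 0" | "m = CARD('n)" "m \<ge> 1" | "1 \<le> m" "m < CARD('n)" using mn by linarith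
  thus ?thesis
  proof cases
    case 1
    have "((\<lambda>s. 0::real) has_real_derivative 0) (at t)" by simp
    thus ?thesis using 1 by (intro exI[of _ 0]) simp
  next
    case 2
    show ?thesis
    proof (rule gap_deriv[OF mn, of 1 "(\<sigma> m)\<^sup>2"])
      show "(0::real) < 1" by simp
      show "\<forall>i\<in>{1..m}. (\<sigma> m)\<^sup>2 \<le> (sing_vals (F + t *\<^sub>R H) i)\<^sup>2"
        using ds2 2 by (auto simp: \<sigma>_def)
      show "\<forall>i\<in>{Suc m..CARD('n)}. (sing_vals (F + t *\<^sub>R H) i)\<^sup>2 \<le> (\<sigma> m)\<^sup>2 - 1"
        using 2 by auto
    qed
  next
    case 3
    have "\<sigma> (Suc m) < \<sigma> m" using gap 3 by (simp add: \<sigma>_def)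
    moreover have "\<sigma> (Suc m) \<ge> 0" using nn 3 by auto
    ultimately have lt: "(\<sigma> (Suc m))\<^sup>2 < (\<sigma> m)\<^sup>2" by (intro power_strict_mono) auto
    show ?thesis
    proof (rule gap_deriv[OF mn, of "(\<sigma> m)\<^sup>2 - (\<sigma> (Suc m))\<^sup>2" "(\<sigma> m)\<^sup>2"])
      show "0 < (\<sigma> m)\<^sup>2 - (\<sigma> (Suc m))\<^sup>2" using lt by simp
      show "\<forall>i\<in>{1..m}. (\<sigma> m)\<^sup>2 \<le> (sing_vals (F + t *\<^sub>R H) i)\<^sup>2"
        using ds2 3 by (auto simp: \<sigma>_def)
      show "\<forall>i\<in>{Suc m..CARD('n)}. (sing_vals (F + t *\<^sub>R H) i)\<^sup>2 \<le> (\<sigma> m)\<^sup>2 - ((\<sigma> m)\<^sup>2 - (\<sigma> (Suc m))\<^sup>2)"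
        using ds2 3 by (auto simp: \<sigma>_def)
    qed
  qed
qed

lemma deriv_unique_left:
  fixes f :: "real \<Rightarrow> real"
  assumes "(f has_real_derivative D1) (at t within {..t})" "(f has_real_derivative D2) (at t within {..t})"
  shows "D1 = D2"
  using assms unfolding has_field_derivative_iff at_within_Iic_at_left
  by (rule tendsto_unique[OF trivial_limit_at_left_real])

lemma deriv_unique_right:
  fixes f :: "real \<Rightarrow> real"
  assumes "(f has_real_derivative D1) (at t within {t..})" "(f has_real_derivative D2) (at t within {t..})"
  shows "D1 = D2"
  using assms unfolding has_field_derivative_iff at_within_Ici_at_right
  by (rule tendsto_unique[OF trivial_limit_at_right_real])

lemma tele:
  fixes f :: "nat \<Rightarrow> real"
  shows "1 \<le> a \<Longrightarrow> a \<le> k \<Longrightarrow> (\<Sum>i=a..k. f i - f (i - 1)) = f k - f (a - 1)"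
proof (induction k)
  case 0 thus ?case by simp
next
  case (Suc k)
  show ?case
  proof (cases "a = Suc k")
    case True thus ?thesis by simp
  next
    case False
    hence "a \<le> k" using Suc.prems by simp
    hence "(\<Sum>i=a..Suc k. f i - f (i - 1)) = (\<Sum>i=a..k. f i - f (i - 1)) + (f (Suc k) - f k)"
      by (simp add: sum.cl_ivl_Suc)
    also have "\<dots> = f (Suc k) - f (a - 1)" using Suc.IH[OF Suc.prems(1) \<open>a \<le> k\<close>] by simp
    finally show ?thesis .
  qed
qed

theorem lemma4p3:
  fixes F H :: "real^'n^'n" and I :: "real set"
  assumes "is_interval I"
    and "\<forall>t\<in>I. det (F + t *\<^sub>R H) > 0"
  shows "\<forall>t\<in>interior I. \<exists>dl dr :: nat \<Rightarrow> real.
     (\<forall>i\<in>{1..CARD('n)}.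
        ((\<lambda>s. sing_vals (F + s *\<^sub>R H) i) has_real_derivative dl i) (at t within {..t}) \<and>
        ((\<lambda>s. sing_vals (F + s *\<^sub>R H) i) has_real_derivative dr i) (at t within {t..})) \<and>
     (\<forall>j\<in>{1..CARD('n)}.
        let J = {i\<in>{1..CARD('n)}. sing_vals (F + t *\<^sub>R H) i = sing_vals (F + t *\<^sub>R H) j} in
        (\<Sum>i\<in>J. dl i) = (\<Sum>i\<in>J. dr i) \<and>
        (\<forall>k\<in>J. (\<Sum>i\<in>{i\<in>J. i \<le> k}. dl i) \<le> (\<Sum>i\<in>{i\<in>J. i \<le> k}. dr i)))"
proof (intro ballI)
  fix t assume tI: "t \<in> interior I"
  hence "t \<in> I" using interior_subset by blast
  hence detpos: "det (F + t *\<^sub>R H) \<noteq> 0" using assms(2) by force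
  define n where "n = CARD('n)"
  define \<sigma> where "\<sigma> s i = sing_vals (F + s *\<^sub>R H) i" for s i
  define SS where "SS m s = (\<Sum>i=1..m. (\<sigma> s i)\<^sup>2)" for m s
  have ex: "\<forall>m. \<exists>LR::real\<times>real. m \<le> n \<longrightarrow> (SS m has_real_derivative fst LR) (at t within {..t}) \<and>
      (SS m has_real_derivative snd LR) (at t within {t..}) \<and> fst LR \<le> snd LR"
  proof
    fix m
    show "\<exists>LR::real\<times>real. m \<le> n \<longrightarrow> (SS m has_real_derivative fst LR) (at t within {..t}) \<and>
      (SS m has_real_derivative snd LR) (at t within {t..}) \<and> fst LR \<le> snd LR"
    proof (cases "m \<le> n")
      case True
      have eq: "SS m = (\<lambda>s. \<Sum>i=1..m. (sing_vals (F + s *\<^sub>R H) i)\<^sup>2)"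
        by (rule ext) (simp add: SS_def \<sigma>_def)
      have "convex_on UNIV (SS m)" unfolding eq using SS_convex True by (simp add: n_def)
      from convex_onesided[OF this, of t] obtain L R where
        "(SS m has_real_derivative L) (at t within {..t})" "(SS m has_real_derivative R) (at t within {t..})" "L \<le> R"
        by blast
      thus ?thesis by (intro exI[of _ "(L, R)"]) simp
    next
      case False thus ?thesis by simp
    qed
  qed
  then obtain LR :: "nat \<Rightarrow> real \<times> real" where LR: "\<And>m. m \<le> n \<Longrightarrow> (SS m has_real_derivative fst (LR m)) (at t within {..t}) \<and>
      (SS m has_real_derivative snd (LR m)) (at t within {t..}) \<and> fst (LR m) \<le> snd (LR m)"
    by metis
  define L where "L m = fst (LR m)" for m
  define R where "R m = snd (LR m)" for m
  have Ld: "(SS m has_real_derivative L m) (at t within {..t})" if "m \<le> n" for m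
    using LR[OF that] by (simp add: L_def)
  have Rd: "(SS m has_real_derivative R m) (at t within {t..})" if "m \<le> n" for m
    using LR[OF that] by (simp add: R_def)
  have LleR: "L m \<le> R m" if "m \<le> n" for m
    using LR[OF that] by (simp add: L_def R_def)
  have pos: "\<sigma> t i > 0" if "i \<in> {1..n}" for i
    unfolding \<sigma>_def by (rule sv_pos[OF detpos]) (use that in \<open>simp add: n_def\<close>)
  have nn: "\<sigma> s i \<ge> 0" if "i \<in> {1..n}" for s i
    using sv_props(1)[of "F + s *\<^sub>R H"] that by (simp add: \<sigma>_def n_def)
  have ds: "\<sigma> s k \<le> \<sigma> s i" if "1 \<le> i" "i \<le> k" "k \<le> n" for s i k
    using sv_props(2)[of "F + s *\<^sub>R H"] that by (simp add: \<sigma>_def n_def)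
  have SSdiff: "SS i s - SS (i - 1) s = (\<sigma> s i)\<^sup>2" if "i \<in> {1..n}" for i s
  proof -
    from that obtain k where k: "i = Suc k" by (cases i) auto
    have "SS (Suc k) s = SS k s + (\<sigma> s (Suc k))\<^sup>2" unfolding SS_def by (simp add: sum.cl_ivl_Suc)
    thus ?thesis using k by simp
  qed
  have sq: "\<sigma> s i = sqrt (SS i s - SS (i - 1) s)" if "i \<in> {1..n}" for i s
    using SSdiff[OF that] nn[OF that] by simp
  define c where "c i = inverse (\<sigma> t i) / 2" for i
  define dl where "dl i = c i * (L i - L (i - 1))" for i
  define dr where "dr i = c i * (R i - R (i - 1))" for i
  have fun_eq: "(\<lambda>s. \<sigma> s i) = (\<lambda>s. sqrt (SS i s - SS (i - 1) s))" if "i \<in> {1..n}" for i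
    using sq[OF that] by (rule ext)
  have sqt: "sqrt (SS i t - SS (i - 1) t) = \<sigma> t i" if "i \<in> {1..n}" for i
    using sq[OF that] by simp
  have p: "0 < SS i t - SS (i - 1) t" if "i \<in> {1..n}" for i
    using SSdiff[OF that] pos[OF that] by simp
  have dld: "((\<lambda>s. \<sigma> s i) has_real_derivative dl i) (at t within {..t})" if i: "i \<in> {1..n}" for i
  proof -
    have D: "((\<lambda>s. SS i s - SS (i - 1) s) has_real_derivative L i - L (i - 1)) (at t within {..t})"
      using i by (intro DERIV_diff Ld) auto
    have "((\<lambda>s. sqrt (SS i s - SS (i - 1) s)) has_real_derivative
        inverse (sqrt (SS i t - SS (i - 1) t)) / 2 * (L i - L (i - 1))) (at t within {..t})"
      by (rule DERIV_chain2[OF DERIV_real_sqrt[OF p[OF i]] D])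
    thus ?thesis unfolding fun_eq[OF i] sqt[OF i] by (simp add: dl_def c_def)
  qed
  have drd: "((\<lambda>s. \<sigma> s i) has_real_derivative dr i) (at t within {t..})" if i: "i \<in> {1..n}" for i
  proof -
    have D: "((\<lambda>s. SS i s - SS (i - 1) s) has_real_derivative R i - R (i - 1)) (at t within {t..})"
      using i by (intro DERIV_diff Rd) auto
    have "((\<lambda>s. sqrt (SS i s - SS (i - 1) s)) has_real_derivative
        inverse (sqrt (SS i t - SS (i - 1) t)) / 2 * (R i - R (i - 1))) (at t within {t..})"
      by (rule DERIV_chain2[OF DERIV_real_sqrt[OF p[OF i]] D])
    thus ?thesis unfolding fun_eq[OF i] sqt[OF i] by (simp add: dr_def c_def)
  qed
  have LR_eq: "L m = R m" if mn: "m \<le> n"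
    and gap: "1 \<le> m \<and> m < n \<longrightarrow> \<sigma> t (Suc m) < \<sigma> t m" for m
  proof -
    have eq: "SS m = (\<lambda>s. \<Sum>i=1..m. (sing_vals (F + s *\<^sub>R H) i)\<^sup>2)"
      by (rule ext) (simp add: SS_def \<sigma>_def)
    obtain D where D: "(SS m has_real_derivative D) (at t)"
      unfolding eq using split_deriv[of m F t H] mn gap by (auto simp: n_def \<sigma>_def)
    have "L m = D" using deriv_unique_left[OF Ld[OF mn] has_field_derivative_at_within[OF D]] .
    moreover have "R m = D" using deriv_unique_right[OF Rd[OF mn] has_field_derivative_at_within[OF D]] .
    ultimately show ?thesis by simp
  qed
  have P1: "\<forall>i\<in>{1..CARD('n)}.
        ((\<lambda>s. sing_vals (F + s *\<^sub>R H) i) has_real_derivative dl i) (at t within {..t}) \<and>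
        ((\<lambda>s. sing_vals (F + s *\<^sub>R H) i) has_real_derivative dr i) (at t within {t..})"
  proof
    fix i assume "i \<in> {1..CARD('n)}"
    hence i: "i \<in> {1..n}" by (simp add: n_def)
    show "((\<lambda>s. sing_vals (F + s *\<^sub>R H) i) has_real_derivative dl i) (at t within {..t}) \<and>
        ((\<lambda>s. sing_vals (F + s *\<^sub>R H) i) has_real_derivative dr i) (at t within {t..})"
      using dld[OF i] drd[OF i] by (simp add: \<sigma>_def)
  qed
  have P2: "\<forall>j\<in>{1..CARD('n)}.
        let J = {i\<in>{1..CARD('n)}. sing_vals (F + t *\<^sub>R H) i = sing_vals (F + t *\<^sub>R H) j} in
        (\<Sum>i\<in>J. dl i) = (\<Sum>i\<in>J. dr i) \<and>
        (\<forall>k\<in>J. (\<Sum>i\<in>{i\<in>J. i \<le> k}. dl i) \<le> (\<Sum>i\<in>{i\<in>J. i \<le> k}. dr i))"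
  proof
    fix j assume "j \<in> {1..CARD('n)}"
    hence j: "j \<in> {1..n}" by (simp add: n_def)
    define lam where "lam = \<sigma> t j"
    define J where "J = {i\<in>{1..n}. \<sigma> t i = lam}"
    have finJ: "finite J" by (simp add: J_def)
    have jJ: "j \<in> J" using j by (simp add: J_def lam_def)
    hence neJ: "J \<noteq> {}" by auto
    define a where "a = Min J"
    define b where "b = Max J"
    have aJ: "a \<in> J" using Min_in[OF finJ neJ] by (simp add: a_def)
    have bJ: "b \<in> J" using Max_in[OF finJ neJ] by (simp add: b_def)
    have amin: "a \<le> i" if "i \<in> J" for i using Min_le[OF finJ that] by (simp add: a_def)
    have bmax: "i \<le> b" if "i \<in> J" for i using Max_ge[OF finJ that] by (simp add: b_def)
    have a1: "1 \<le> a" and bn: "b \<le> n" using aJ bJ by (auto simp: J_def)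
    have siga: "\<sigma> t a = lam" and sigb: "\<sigma> t b = lam" using aJ bJ by (auto simp: J_def)
    have interval: "{i\<in>J. i \<le> k} = {a..k}" if kJ: "k \<in> J" for k
    proof
      show "{i\<in>J. i \<le> k} \<subseteq> {a..k}" using amin by auto
      show "{a..k} \<subseteq> {i\<in>J. i \<le> k}"
      proof
        fix i assume i: "i \<in> {a..k}"
        have kn: "k \<le> n" "\<sigma> t k = lam" using kJ by (auto simp: J_def)
        have "\<sigma> t k \<le> \<sigma> t i" using ds[of i k] i a1 kn by auto
        moreover have "\<sigma> t i \<le> \<sigma> t a" using ds[of a i] i a1 kn by auto
        ultimately have "\<sigma> t i = lam" using siga kn by simp
        thus "i \<in> {i\<in>J. i \<le> k}" using i a1 kn by (auto simp: J_def)
      qed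
    qed
    have Jab: "{i\<in>J. i \<le> b} = J" using bmax by auto
    have lam0: "lam > 0" using pos[OF j] by (simp add: lam_def)
    define c0 where "c0 = inverse lam / 2"
    have c00: "c0 > 0" using lam0 by (simp add: c0_def)
    have cJ: "c i = c0" if "i \<in> J" for i using that by (simp add: J_def c_def c0_def)
    have sumL: "(\<Sum>i\<in>{i\<in>J. i \<le> k}. dl i) = c0 * (L k - L (a - 1))" if kJ: "k \<in> J" for k
    proof -
      have "(\<Sum>i\<in>{i\<in>J. i \<le> k}. dl i) = (\<Sum>i=a..k. c0 * (L i - L (i - 1)))"
        unfolding interval[OF kJ]
      proof (intro sum.cong refl)
        fix x assume "x \<in> {a..k}"
        hence "x \<in> J" using interval[OF kJ] by blast
        thus "dl x = c0 * (L x - L (x - 1))" using cJ by (simp add: dl_def)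
      qed
      also have "\<dots> = c0 * (\<Sum>i=a..k. L i - L (i - 1))" by (simp add: sum_distrib_left)
      also have "\<dots> = c0 * (L k - L (a - 1))" using tele[OF a1, of k L] amin[OF kJ] by simp
      finally show ?thesis .
    qed
    have sumR: "(\<Sum>i\<in>{i\<in>J. i \<le> k}. dr i) = c0 * (R k - R (a - 1))" if kJ: "k \<in> J" for k
    proof -
      have "(\<Sum>i\<in>{i\<in>J. i \<le> k}. dr i) = (\<Sum>i=a..k. c0 * (R i - R (i - 1)))"
        unfolding interval[OF kJ]
      proof (intro sum.cong refl)
        fix x assume "x \<in> {a..k}"
        hence "x \<in> J" using interval[OF kJ] by blast
        thus "dr x = c0 * (R x - R (x - 1))" using cJ by (simp add: dr_def)
      qed
      also have "\<dots> = c0 * (\<Sum>i=a..k. R i - R (i - 1))" by (simp add: sum_distrib_left)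
      also have "\<dots> = c0 * (R k - R (a - 1))" using tele[OF a1, of k R] amin[OF kJ] by simp
      finally show ?thesis .
    qed
    have gapA: "L (a - 1) = R (a - 1)"
    proof (rule LR_eq)
      show "a - 1 \<le> n" using a1 bn amin[OF bJ] by simp
      show "1 \<le> a - 1 \<and> a - 1 < n \<longrightarrow> \<sigma> t (Suc (a - 1)) < \<sigma> t (a - 1)"
      proof
        assume h: "1 \<le> a - 1 \<and> a - 1 < n"
        have sa: "Suc (a - 1) = a" using a1 by simp
        have "a - 1 \<notin> J" using amin[of "a - 1"] a1 by fastforce
        hence "\<sigma> t (a - 1) \<noteq> lam" using h by (auto simp: J_def)
        moreover have "\<sigma> t a \<le> \<sigma> t (a - 1)" using ds[of "a - 1" a] h bn amin[OF bJ] by simp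
        ultimately show "\<sigma> t (Suc (a - 1)) < \<sigma> t (a - 1)" using siga sa by simp
      qed
    qed
    have gapB: "L b = R b"
    proof (rule LR_eq[OF bn])
      show "1 \<le> b \<and> b < n \<longrightarrow> \<sigma> t (Suc b) < \<sigma> t b"
      proof
        assume h: "1 \<le> b \<and> b < n"
        have "Suc b \<notin> J" using bmax[of "Suc b"] by fastforce
        hence "\<sigma> t (Suc b) \<noteq> lam" using h by (auto simp: J_def)
        moreover have "\<sigma> t (Suc b) \<le> \<sigma> t b" using ds[of b "Suc b"] h by simp
        ultimately show "\<sigma> t (Suc b) < \<sigma> t b" using sigb by simp
      qed
    qed
    have main1: "(\<Sum>i\<in>J. dl i) = (\<Sum>i\<in>J. dr i)"
      using sumL[OF bJ] sumR[OF bJ] gapA gapB unfolding Jab by simp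
    have main2: "(\<Sum>i\<in>{i\<in>J. i \<le> k}. dl i) \<le> (\<Sum>i\<in>{i\<in>J. i \<le> k}. dr i)" if kJ: "k \<in> J" for k
    proof -
      have "k \<le> n" using kJ by (simp add: J_def)
      hence "L k - L (a - 1) \<le> R k - R (a - 1)" using LleR gapA by simp
      hence "c0 * (L k - L (a - 1)) \<le> c0 * (R k - R (a - 1))" using c00 by (intro mult_left_mono) auto
      thus ?thesis using sumL[OF kJ] sumR[OF kJ] by simp
    qed
    have Jeq: "{i\<in>{1..CARD('n)}. sing_vals (F + t *\<^sub>R H) i = sing_vals (F + t *\<^sub>R H) j} = J"
      by (simp add: J_def n_def \<sigma>_def lam_def)
    show "let J = {i\<in>{1..CARD('n)}. sing_vals (F + t *\<^sub>R H) i = sing_vals (F + t *\<^sub>R H) j} in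
        (\<Sum>i\<in>J. dl i) = (\<Sum>i\<in>J. dr i) \<and>
        (\<forall>k\<in>J. (\<Sum>i\<in>{i\<in>J. i \<le> k}. dl i) \<le> (\<Sum>i\<in>{i\<in>J. i \<le> k}. dr i))"
      unfolding Let_def Jeq using main1 main2 by blast
  qed
  show "\<exists>dl dr :: nat \<Rightarrow> real.
     (\<forall>i\<in>{1..CARD('n)}.
        ((\<lambda>s. sing_vals (F + s *\<^sub>R H) i) has_real_derivative dl i) (at t within {..t}) \<and>
        ((\<lambda>s. sing_vals (F + s *\<^sub>R H) i) has_real_derivative dr i) (at t within {t..})) \<and>
     (\<forall>j\<in>{1..CARD('n)}.
        let J = {i\<in>{1..CARD('n)}. sing_vals (F + t *\<^sub>R H) i = sing_vals (F + t *\<^sub>R H) j} in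
        (\<Sum>i\<in>J. dl i) = (\<Sum>i\<in>J. dr i) \<and>
        (\<forall>k\<in>J. (\<Sum>i\<in>{i\<in>J. i \<le> k}. dl i) \<le> (\<Sum>i\<in>{i\<in>J. i \<le> k}. dr i)))"
    by (intro exI[of _ dl] exI[of _ dr] conjI P1 P2)
qed

end
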